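(* Let $\phi_1,\dots,\phi_n,\psi_1,\dots,\psi_m$ be Drinfeld modules over $K$ with $\operatorname{rk}\phi_i>\operatorname{rk}\psi_j$ for all $i,j$. Then $\operatorname{Ext}^1_\tau\big(\prod_{i=1}^n\phi_i,\prod_{j=1}^m\psi_j\big)$ has a natural structure of a $\mathbf t$-module, i.e. there is a $\mathbf t$-module $\Pi:\mathbb F_q[t]\to\mathrm{Mat}_{m\sum_i\operatorname{rk}\phi_i}(K\{\tau\})$ whose Mordell–Weil $\mathbb F_q[t]$-module is isomorphic to $\operatorname{Ext}^1_\tau\big(\prod_i\phi_i,\prod_j\psi_j\big)$.
   Context: $A=\mathbb F_q[t]$, $K$ a field of characteristic $p$ with $\mathbb F_q$-algebra map $\iota:A\to K$, $\theta=\iota(t)$; $K\{\tau\}$ twisted polynomials, $\tau x=x^q\tau$. A $\mathbf t$-module of dimension $d$: $\mathbb F_q$-algebra homomorphism $\Phi:\mathbb F_q[t]\to\mathrm{Mat}_d(K\{\tau\})$, $\Phi_t=(\theta I+N)+\sum_{i\ge1}M_i\tau^i$, $N$ nilpotent; rank $=\deg_\tau\Phi_t$; Drinfeld module = dimension one. Mordell–Weil module: $K^d$ with $t$ acting by evaluation of $\Phi_t$. The product $\prod_{i=1}^n\phi_i$ is the $n$-dimensional $\mathbf t$-module $a\mapsto\mathrm{diag}(\phi_1(a),\dots,\phi_n(a))$. For $\mathbf t$-modules $\Phi$ (dim $d$), $\Psi$ (dim $e$): $\mathrm{Der}(\Phi,\Psi)$ = $\mathbb F_q$-linear $\delta:\mathbb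 F_q[t]\to\mathrm{Mat}_{e\times d}(K\{\tau\})$ with $\delta(ab)=\Psi_a\delta(b)+\delta(a)\Phi_b$; inner: $\delta^{(U)}(a)=U\Phi_a-\Psi_aU$; $\operatorname{Ext}^1_\tau(\Phi,\Psi)=\mathrm{Der}(\Phi,\Psi)/\mathrm{Der}_{in}(\Phi,\Psi)$ with $a*[\delta]=[\Psi_a\delta]$ (this is the group of extensions of $\Phi$ by $\Psi$). *)

theory Defs
  imports "HOL-Computational_Algebra.Polynomial"
begin

text \<open>Twisted polynomials K{tau} are represented by 'k poly: coefficient i is the
coefficient of tau^i.  The multiplication is twisted: (a tau^i)(b tau^j) = a b^(q^i) tau^(i+j).\<close>

definition tmul :: "nat \<Rightarrow> 'k::field poly \<Rightarrow> 'k poly \<Rightarrow> 'k poly" where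
  "tmul q f g = (\<Sum>i\<le>degree f. \<Sum>j\<le>degree g.
      monom (coeff f i * (coeff g j) ^ (q ^ i)) (i + j))"

definition teval :: "nat \<Rightarrow> 'k::field poly \<Rightarrow> 'k \<Rightarrow> 'k" where
  "teval q f x = (\<Sum>i\<le>degree f. coeff f i * x ^ (q ^ i))"

text \<open>Matrices over K{tau}: functions nat => nat => 'k poly, zero outside the index range.\<close>
type_synonym 'k tmat = "nat \<Rightarrow> nat \<Rightarrow> 'k poly"

definition mats :: "nat \<Rightarrow> nat \<Rightarrow> 'k::field tmat set" where
  "mats e d = {M. \<forall>i j. (d \<le> j \<or> e \<le> i) \<longrightarrow> M i j = 0}"

definition vecs :: "nat \<Rightarrow> (nat \<Rightarrow> 'k::field) set" where
  "vecs d = {v. \<forall>i. d \<le> i \<longrightarrow> v i = 0}"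

definition mmul :: "nat \<Rightarrow> nat \<Rightarrow> 'k::field tmat \<Rightarrow> 'k tmat \<Rightarrow> 'k tmat" where
  "mmul q k A B = (\<lambda>i j. \<Sum>l<k. tmul q (A i l) (B l j))"

definition madd :: "'k::field tmat \<Rightarrow> 'k tmat \<Rightarrow> 'k tmat" where
  "madd A B = (\<lambda>i j. A i j + B i j)"

definition msub :: "'k::field tmat \<Rightarrow> 'k tmat \<Rightarrow> 'k tmat" where
  "msub A B = (\<lambda>i j. A i j - B i j)"

definition msmul :: "'k::field \<Rightarrow> 'k tmat \<Rightarrow> 'k tmat" where
  "msmul c A = (\<lambda>i j. smult c (A i j))"

definition mid :: "nat \<Rightarrow> 'k::field tmat" where
  "mid d = (\<lambda>i j. if i = j \<and> i < d then 1 else 0)"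

fun mpow :: "nat \<Rightarrow> nat \<Rightarrow> 'k::field tmat \<Rightarrow> nat \<Rightarrow> 'k tmat" where
  "mpow q d M 0 = mid d"
| "mpow q d M (Suc n) = mmul q d M (mpow q d M n)"

definition mvec :: "nat \<Rightarrow> nat \<Rightarrow> 'k::field tmat \<Rightarrow> (nat \<Rightarrow> 'k) \<Rightarrow> (nat \<Rightarrow> 'k)" where
  "mvec q d M v = (\<lambda>i. \<Sum>j<d. teval q (M i j) (v j))"

text \<open>A = F_q[t], realised inside K[t] as the polynomials with coefficients in
F_q = {x in K. x^q = x}.\<close>
definition FqT :: "nat \<Rightarrow> 'k::field poly set" where
  "FqT q = {a. \<forall>i. coeff a i ^ q = coeff a i}"

text \<open>For a t-module given by Phi_t (d x d), Phi_a = a(Phi_t).\<close>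
definition tact :: "nat \<Rightarrow> nat \<Rightarrow> 'k::field tmat \<Rightarrow> 'k poly \<Rightarrow> 'k tmat" where
  "tact q d Phit a = (\<lambda>r s. \<Sum>i\<le>degree a. smult (coeff a i) (mpow q d Phit i r s))"

definition kmul :: "nat \<Rightarrow> (nat \<Rightarrow> nat \<Rightarrow> 'k::field) \<Rightarrow> (nat \<Rightarrow> nat \<Rightarrow> 'k) \<Rightarrow> (nat \<Rightarrow> nat \<Rightarrow> 'k)" where
  "kmul d A B = (\<lambda>i j. \<Sum>l<d. A i l * B l j)"

definition knilpotent :: "nat \<Rightarrow> (nat \<Rightarrow> nat \<Rightarrow> 'k::field) \<Rightarrow> bool" where
  "knilpotent d N \<longleftrightarrow> (\<exists>k. ((kmul d N) ^^ k) N = (\<lambda>i j. 0))"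

text \<open>t-module of dimension d: Phi_t = (theta I + N) + sum M_i tau^i, N nilpotent.\<close>
definition is_tmodule :: "nat \<Rightarrow> 'k::field \<Rightarrow> nat \<Rightarrow> 'k tmat \<Rightarrow> bool" where
  "is_tmodule q \<theta> d Phit \<longleftrightarrow> Phit \<in> mats d d \<and>
     knilpotent d (\<lambda>i j. coeff (Phit i j) 0 - (if i = j \<and> i < d then \<theta> else 0))"

definition is_drinfeld :: "'k::field \<Rightarrow> 'k poly \<Rightarrow> bool" where
  "is_drinfeld \<theta> f \<longleftrightarrow> coeff f 0 = \<theta> \<and> 1 \<le> degree f"

definition drank :: "'k::field poly \<Rightarrow> nat" where
  "drank f = degree f"

definition prodmod :: "nat \<Rightarrow> (nat \<Rightarrow> 'k::field poly) \<Rightarrow> 'k tmat" where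
  "prodmod n phis = (\<lambda>i j. if i = j \<and> i < n then phis i else 0)"

definition is_der :: "nat \<Rightarrow> nat \<Rightarrow> 'k::field tmat \<Rightarrow> nat \<Rightarrow> 'k tmat
    \<Rightarrow> ('k poly \<Rightarrow> 'k tmat) \<Rightarrow> bool" where
  "is_der q d Phit e Psit \<delta> \<longleftrightarrow>
     (\<forall>a\<in>FqT q. \<delta> a \<in> mats e d) \<and>
     (\<forall>a. a \<notin> FqT q \<longrightarrow> \<delta> a = (\<lambda>i j. 0)) \<and>
     (\<forall>a\<in>FqT q. \<forall>b\<in>FqT q. \<delta> (a + b) = madd (\<delta> a) (\<delta> b)) \<and>
     (\<forall>c a. c ^ q = c \<longrightarrow> a \<in> FqT q \<longrightarrow> \<delta> (smult c a) = msmul c (\<delta> a)) \<and>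
     (\<forall>a\<in>FqT q. \<forall>b\<in>FqT q. \<delta> (a * b) =
        madd (mmul q e (tact q e Psit a) (\<delta> b)) (mmul q d (\<delta> a) (tact q d Phit b)))"

definition is_inner_der :: "nat \<Rightarrow> nat \<Rightarrow> 'k::field tmat \<Rightarrow> nat \<Rightarrow> 'k tmat
    \<Rightarrow> ('k poly \<Rightarrow> 'k tmat) \<Rightarrow> bool" where
  "is_inner_der q d Phit e Psit \<delta> \<longleftrightarrow>
     (\<exists>U\<in>mats e d. \<forall>a\<in>FqT q.
        \<delta> a = msub (mmul q d U (tact q d Phit a)) (mmul q e (tact q e Psit a) U))"

text \<open>Ext^1_tau(Phi,Psi) = Der/Der_in is isomorphic as F_q[t]-module (a*[delta] = [Psi_a delta])
to the Mordell-Weil module of Pi (dimension D): expressed as a surjective F_q[t]-linear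
map from Der onto K^D whose fibres are exactly the cosets of Der_in.\<close>
definition ext_iso_MW :: "nat \<Rightarrow> nat \<Rightarrow> 'k::field tmat \<Rightarrow> nat \<Rightarrow> 'k tmat \<Rightarrow> nat \<Rightarrow> 'k tmat
    \<Rightarrow> (('k poly \<Rightarrow> 'k tmat) \<Rightarrow> (nat \<Rightarrow> 'k)) \<Rightarrow> bool" where
  "ext_iso_MW q d Phit e Psit D Pit F \<longleftrightarrow>
     (\<forall>\<delta>. is_der q d Phit e Psit \<delta> \<longrightarrow> F \<delta> \<in> vecs D) \<and>
     (\<forall>v\<in>vecs D. \<exists>\<delta>. is_der q d Phit e Psit \<delta> \<and> F \<delta> = v) \<and>
     (\<forall>\<delta>1 \<delta>2. is_der q d Phit e Psit \<delta>1 \<longrightarrow> is_der q d Phit e Psit \<delta>2 \<longrightarrow>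
        (F \<delta>1 = F \<delta>2 \<longleftrightarrow> is_inner_der q d Phit e Psit (\<lambda>a. msub (\<delta>1 a) (\<delta>2 a)))) \<and>
     (\<forall>\<delta>1 \<delta>2. is_der q d Phit e Psit \<delta>1 \<longrightarrow> is_der q d Phit e Psit \<delta>2 \<longrightarrow>
        F (\<lambda>a. madd (\<delta>1 a) (\<delta>2 a)) = (\<lambda>i. F \<delta>1 i + F \<delta>2 i)) \<and>
     (\<forall>a\<in>FqT q. \<forall>\<delta>. is_der q d Phit e Psit \<delta> \<longrightarrow>
        F (\<lambda>b. mmul q e (tact q e Psit a) (\<delta> b)) = mvec q D (tact q D Pit a) (F \<delta>))"

end

theory Submission
  imports Defs
begin


locale frob =
  fixes q :: nat and tyk :: "'k::field itself"
  assumes q_pos: "0 < q"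
    and frob_add: "\<And>x y :: 'k. (x + y) ^ q = x ^ q + y ^ q"
begin

lemma q_pos_simp [simp]: "0 < q"
  using q_pos .

lemma qpow_pos: "0 < q ^ i"
  using q_pos by simp

lemma frobn_add: "((x::'k) + y) ^ (q ^ i) = x ^ (q ^ i) + y ^ (q ^ i)"
proof (induction i)
  case 0 then show ?case by simp
next
  case (Suc i)
  have e: "q ^ Suc i = q ^ i * q" by simp
  have "(x + y) ^ (q ^ Suc i) = ((x + y) ^ (q ^ i)) ^ q"
    by (simp only: e power_mult)
  also have "\<dots> = (x ^ (q ^ i)) ^ q + (y ^ (q ^ i)) ^ q" using Suc frob_add by simp
  finally show ?case by (simp only: e power_mult)
qed

lemma zero_qpow [simp]: "(0::'k) ^ (q ^ i) = 0"
  using qpow_pos by simp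

lemma frobn_sum: "(sum (f :: 'a \<Rightarrow> 'k) A) ^ (q ^ i) = (\<Sum>x\<in>A. f x ^ (q ^ i))"
  by (induction A rule: infinite_finite_induct) (auto simp: frobn_add)

lemma frobn_minus: "(- (x::'k)) ^ (q ^ i) = - (x ^ (q ^ i))"
proof -
  have "(x + - x) ^ (q ^ i) = 0" by simp
  then have "x ^ (q ^ i) + (- x) ^ (q ^ i) = 0" by (simp only: frobn_add)
  then show ?thesis by (simp add: eq_neg_iff_add_eq_0 add.commute)
qed

lemma frobn_diff: "((x::'k) - y) ^ (q ^ i) = x ^ (q ^ i) - y ^ (q ^ i)"
  using frobn_add[of x "- y" i] frobn_minus[of y i] by simp

lemma fq_pow: "(c::'k) ^ q = c \<Longrightarrow> c ^ (q ^ i) = c"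
proof (induction i)
  case 0 then show ?case by simp
next
  case (Suc i)
  have e: "q ^ Suc i = q ^ i * q" by simp
  have "c ^ (q ^ Suc i) = (c ^ (q ^ i)) ^ q" by (simp only: e power_mult)
  then show ?case using Suc by simp
qed

lemma coeff_tmul: "coeff (tmul q (f::'k poly) g) n = (\<Sum>i\<le>n. coeff f i * coeff g (n - i) ^ (q ^ i))"
proof -
  have "coeff (tmul q f g) n = (\<Sum>i\<le>degree f. \<Sum>j\<le>degree g.
      (if i + j = n then coeff f i * coeff g j ^ (q ^ i) else 0))"
    unfolding tmul_def by (simp add: coeff_sum coeff_monom)
  also have "\<dots> = (\<Sum>i\<le>degree f. if i \<le> n then coeff f i * coeff g (n - i) ^ (q ^ i) else 0)"
  proof (rule sum.cong[OF refl])
    fix i assume "i \<in> {..degree f}"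
    show "(\<Sum>j\<le>degree g. (if i + j = n then coeff f i * coeff g j ^ (q ^ i) else 0)) =
        (if i \<le> n then coeff f i * coeff g (n - i) ^ (q ^ i) else 0)"
    proof (cases "i \<le> n \<and> n - i \<le> degree g")
      case True
      have "(\<Sum>j\<le>degree g. (if i + j = n then coeff f i * coeff g j ^ (q ^ i) else 0)) =
          (\<Sum>j\<le>degree g. (if j = n - i then coeff f i * coeff g j ^ (q ^ i) else 0))"
        using True by (intro sum.cong) auto
      also have "\<dots> = coeff f i * coeff g (n - i) ^ (q ^ i)" using True by simp
      finally show ?thesis using True by simp
    next
      case False
      show ?thesis
      proof (cases "i \<le> n")
        case False then show ?thesis by (auto intro!: sum.neutral)
      next
        case True
        with False have "degree g < n - i" by simp
        then have "coeff g (n - i) = 0" by (simp add: coeff_eq_0)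
        moreover have "(\<Sum>j\<le>degree g. (if i + j = n then coeff f i * coeff g j ^ (q ^ i) else 0)) = 0"
          using \<open>degree g < n - i\<close> by (intro sum.neutral) auto
        ultimately show ?thesis using True q_pos by simp
      qed
    qed
  qed
  also have "\<dots> = (\<Sum>i\<le>n. coeff f i * coeff g (n - i) ^ (q ^ i))"
  proof -
    let ?h = "\<lambda>i. if i \<le> n then coeff f i * coeff g (n - i) ^ (q ^ i) else 0"
    have "(\<Sum>i\<le>degree f. ?h i) = (\<Sum>i\<le>max n (degree f). ?h i)"
      by (intro sum.mono_neutral_left) (auto simp: coeff_eq_0)
    also have "\<dots> = (\<Sum>i\<le>n. ?h i)"
      by (intro sum.mono_neutral_right) auto
    finally show ?thesis by simp
  qed
  finally show ?thesis .
qed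


lemma sum_single:
  assumes "finite A" "a \<in> A" "\<And>i. i \<in> A \<Longrightarrow> i \<noteq> a \<Longrightarrow> g i = 0"
  shows "sum g A = (g a :: 'b::comm_monoid_add)"
proof -
  have "sum g A = g a + sum g (A - {a})" using assms by (simp add: sum.remove)
  also have "sum g (A - {a}) = 0" using assms by (intro sum.neutral) auto
  finally show ?thesis by simp
qed

lemma coeff_tmul_monom_left:
  "coeff (tmul q (monom (a::'k) j) g) n = (if j \<le> n then a * coeff g (n - j) ^ (q ^ j) else 0)"
proof (cases "j \<le> n")
  case True
  then show ?thesis unfolding coeff_tmul
    by (subst sum_single[of _ j]) (auto simp: coeff_monom)
next
  case False
  then show ?thesis unfolding coeff_tmul by (auto intro!: sum.neutral simp: coeff_monom)
qed

lemma coeff_tmul_monom_right: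
  "coeff (tmul q f (monom (b::'k) j)) n = (if j \<le> n then coeff f (n - j) * b ^ (q ^ (n - j)) else 0)"
proof (cases "j \<le> n")
  case True
  then show ?thesis unfolding coeff_tmul
    using q_pos by (subst sum_single[of _ "n - j"]) (auto simp: coeff_monom)
next
  case False
  then show ?thesis unfolding coeff_tmul by (auto intro!: sum.neutral simp: coeff_monom)
qed

lemma tmul_add_left: "tmul q ((f::'k poly) + g) h = tmul q f h + tmul q g h"
  by (rule poly_eqI) (simp add: coeff_tmul distrib_right sum.distrib)

lemma tmul_add_right: "tmul q (f::'k poly) (g + h) = tmul q f g + tmul q f h"
  by (rule poly_eqI) (simp add: coeff_tmul frobn_add distrib_left sum.distrib)

lemma tmul_zero_left [simp]: "tmul q 0 (f::'k poly) = 0"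
  by (rule poly_eqI) (simp add: coeff_tmul)

lemma tmul_zero_right [simp]: "tmul q (f::'k poly) 0 = 0"
  by (rule poly_eqI) (simp add: coeff_tmul)

lemma tmul_minus_left: "tmul q (- (f::'k poly)) g = - tmul q f g"
  by (rule poly_eqI) (simp add: coeff_tmul sum_negf)

lemma tmul_minus_right: "tmul q (f::'k poly) (- g) = - tmul q f g"
  by (rule poly_eqI) (simp add: coeff_tmul frobn_minus sum_negf)

lemma tmul_diff_left: "tmul q ((f::'k poly) - g) h = tmul q f h - tmul q g h"
  using tmul_add_left[of f "- g" h] by (simp add: tmul_minus_left)

lemma tmul_diff_right: "tmul q (f::'k poly) (g - h) = tmul q f g - tmul q f h"
  using tmul_add_right[of f g "- h"] by (simp add: tmul_minus_right)

lemma tmul_smult_left: "tmul q (smult (c::'k) f) g = smult c (tmul q f g)"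
  by (rule poly_eqI) (simp add: coeff_tmul sum_distrib_left mult.assoc)

lemma tmul_smult_right:
  assumes "(c::'k) ^ q = c"
  shows "tmul q f (smult c g) = smult c (tmul q f g)"
  by (rule poly_eqI) (simp add: coeff_tmul sum_distrib_left power_mult_distrib fq_pow[OF assms] ac_simps)

lemma tmul_sum_left: "tmul q (\<Sum>x\<in>A. F x) (g::'k poly) = (\<Sum>x\<in>A. tmul q (F x) g)"
  by (induction A rule: infinite_finite_induct) (auto simp: tmul_add_left)

lemma tmul_sum_right: "tmul q (f::'k poly) (\<Sum>x\<in>A. G x) = (\<Sum>x\<in>A. tmul q f (G x))"
  by (induction A rule: infinite_finite_induct) (auto simp: tmul_add_right)

lemma tmul_monom_monom: "tmul q (monom (a::'k) i) (monom b j) = monom (a * b ^ (q ^ i)) (i + j)"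
  by (rule poly_eqI) (auto simp: coeff_tmul_monom_left coeff_monom)

lemma tmul_const_left: "tmul q [:(c::'k):] g = smult c g"
  using coeff_tmul_monom_left[of c 0 g] by (intro poly_eqI) (simp add: monom_0)

lemma tmul_one_left [simp]: "tmul q 1 (g::'k poly) = g"
  using tmul_const_left[of 1 g] by (simp add: one_pCons)

lemma tmul_const_right:
  assumes "(c::'k) ^ q = c" shows "tmul q f [:c:] = smult c f"
  using coeff_tmul_monom_right[of f c 0] fq_pow[OF assms] by (intro poly_eqI) (simp add: monom_0)

lemma tmul_one_right [simp]: "tmul q (f::'k poly) 1 = f"
  using tmul_const_right[of 1 f] by (simp add: one_pCons)

lemma coeff_tmul_0: "coeff (tmul q (f::'k poly) g) 0 = coeff f 0 * coeff g 0"
  by (simp add: coeff_tmul)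

lemma coeff_tmul_high:
  assumes "degree f + degree g < n"
  shows "coeff (tmul q (f::'k poly) g) n = 0"
  unfolding coeff_tmul
proof (intro sum.neutral ballI)
  fix i assume "i \<in> {..n}"
  show "coeff f i * coeff g (n - i) ^ q ^ i = 0"
  proof (cases "degree f < i")
    case True then show ?thesis by (simp add: coeff_eq_0)
  next
    case False
    then have "degree g < n - i" using assms by linarith
    then show ?thesis by (simp add: coeff_eq_0)
  qed
qed

lemma coeff_tmul_top:
  "coeff (tmul q (f::'k poly) g) (degree f + degree g) = lead_coeff f * lead_coeff g ^ (q ^ degree f)"
  unfolding coeff_tmul
proof (subst sum_single[of _ "degree f"])
  fix i assume "i \<in> {..degree f + degree g}" "i \<noteq> degree f"
  show "coeff f i * coeff g (degree f + degree g - i) ^ q ^ i = 0"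
  proof (cases "degree f < i")
    case True then show ?thesis by (simp add: coeff_eq_0)
  next
    case False
    then have "degree g < degree f + degree g - i" using \<open>i \<noteq> degree f\<close> by linarith
    then show ?thesis by (simp add: coeff_eq_0)
  qed
qed auto

lemma degree_tmul_le: "degree (tmul q (f::'k poly) g) \<le> degree f + degree g"
  by (rule degree_le) (simp add: coeff_tmul_high)

lemma qpow_qpow: "((z::'k) ^ (q ^ b)) ^ (q ^ a) = z ^ (q ^ (a + b))"
  by (simp add: power_mult[symmetric] power_add mult.commute)

lemma tmul_assoc_monom:
  "tmul q (tmul q (monom (x::'k) a) (monom y b)) (monom z c) = tmul q (monom x a) (tmul q (monom y b) (monom z c))"
  by (simp add: tmul_monom_monom power_mult_distrib qpow_qpow ac_simps)

lemma tmul_assoc: "tmul q (tmul q (f::'k poly) g) h = tmul q f (tmul q g h)"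
proof -
  let ?F = "\<lambda>a. monom (coeff f a) a" and ?G = "\<lambda>a. monom (coeff g a) a" and ?H = "\<lambda>a. monom (coeff h a) a"
  have "tmul q (tmul q f g) h = tmul q (tmul q (\<Sum>a\<le>degree f. ?F a) (\<Sum>b\<le>degree g. ?G b)) (\<Sum>c\<le>degree h. ?H c)"
    by (simp only: poly_as_sum_of_monoms)
  also have "\<dots> = (\<Sum>c\<le>degree h. \<Sum>b\<le>degree g. \<Sum>a\<le>degree f. tmul q (tmul q (?F a) (?G b)) (?H c))"
    by (simp only: tmul_sum_left tmul_sum_right)
  also have "\<dots> = (\<Sum>c\<le>degree h. \<Sum>b\<le>degree g. \<Sum>a\<le>degree f. tmul q (?F a) (tmul q (?G b) (?H c)))"
    by (simp only: tmul_assoc_monom)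
  also have "\<dots> = tmul q (\<Sum>a\<le>degree f. ?F a) (tmul q (\<Sum>b\<le>degree g. ?G b) (\<Sum>c\<le>degree h. ?H c))"
    by (simp only: tmul_sum_left tmul_sum_right)
  also have "\<dots> = tmul q f (tmul q g h)"
    by (simp only: poly_as_sum_of_monoms)
  finally show ?thesis .
qed

lemma teval_ext:
  assumes "degree f \<le> N"
  shows "teval q (f::'k poly) x = (\<Sum>i\<le>N. coeff f i * x ^ (q ^ i))"
  unfolding teval_def using assms
  by (intro sum.mono_neutral_left) (auto simp: coeff_eq_0)

lemma teval_add_poly: "teval q ((f::'k poly) + g) x = teval q f x + teval q g x"
proof -
  let ?N = "max (degree f) (degree g)"
  have "degree (f + g) \<le> ?N" by (rule degree_add_le) auto
  then show ?thesis
    by (simp add: teval_ext[of _ ?N] distrib_right sum.distrib)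
qed

lemma teval_zero_poly [simp]: "teval q 0 (x::'k) = 0"
  by (simp add: teval_def)

lemma teval_smult: "teval q (smult (c::'k) f) x = c * teval q f x"
  by (simp add: teval_def sum_distrib_left mult.assoc)

lemma teval_minus_poly: "teval q (- (f::'k poly)) x = - teval q f x"
  using teval_smult[of "-1" f x] by simp

lemma teval_diff_poly: "teval q ((f::'k poly) - g) x = teval q f x - teval q g x"
  using teval_add_poly[of f "- g" x] by (simp add: teval_minus_poly)

lemma teval_sum_poly: "teval q (\<Sum>i\<in>A. F i) (x::'k) = (\<Sum>i\<in>A. teval q (F i) x)"
  by (induction A rule: infinite_finite_induct) (auto simp: teval_add_poly)

lemma teval_monom: "teval q (monom (a::'k) i) x = a * x ^ (q ^ i)"
  by (subst teval_ext[of _ i]) (auto simp: coeff_monom degree_monom_le sum_single[of _ i])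

lemma teval_const: "teval q [:(a::'k):] x = a * x"
  using teval_monom[of a 0 x] by (simp add: monom_0)

lemma teval_add: "teval q f ((x::'k) + y) = teval q f x + teval q f y"
  by (simp add: teval_def frobn_add distrib_left sum.distrib)

lemma teval_zero [simp]: "teval q f (0::'k) = 0"
  by (simp add: teval_def)

lemma teval_sum: "teval q f (\<Sum>i\<in>A. (X i::'k)) = (\<Sum>i\<in>A. teval q f (X i))"
  by (induction A rule: infinite_finite_induct) (auto simp: teval_add)

lemma teval_tmul: "teval q (tmul q (f::'k poly) g) x = teval q f (teval q g x)"
proof -
  let ?F = "\<lambda>a. monom (coeff f a) a" and ?G = "\<lambda>a. monom (coeff g a) a"
  have "teval q (tmul q (f::'k poly) g) x = teval q (tmul q (\<Sum>a\<le>degree f. ?F a) (\<Sum>b\<le>degree g. ?G b)) x"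
    by (simp only: poly_as_sum_of_monoms)
  also have "\<dots> = (\<Sum>b\<le>degree g. \<Sum>a\<le>degree f. teval q (tmul q (?F a) (?G b)) x)"
    by (simp only: tmul_sum_left tmul_sum_right teval_sum_poly)
  also have "\<dots> = (\<Sum>b\<le>degree g. \<Sum>a\<le>degree f. teval q (?F a) (teval q (?G b) x))"
    by (simp add: tmul_monom_monom teval_monom power_mult_distrib qpow_qpow ac_simps)
  also have "\<dots> = teval q (\<Sum>a\<le>degree f. ?F a) (teval q (\<Sum>b\<le>degree g. ?G b) x)"
    by (simp only: teval_sum_poly teval_sum)
  also have "\<dots> = teval q f (teval q g x)"
    by (simp only: poly_as_sum_of_monoms)
  finally show ?thesis .
qed

end



fun tpow :: "nat \<Rightarrow> 'k::field poly \<Rightarrow> nat \<Rightarrow> 'k poly" where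
  "tpow q f 0 = 1"
| "tpow q f (Suc l) = tmul q f (tpow q f l)"

definition pa :: "nat \<Rightarrow> 'k::field poly \<Rightarrow> 'k poly \<Rightarrow> 'k poly" where
  "pa q f a = (\<Sum>l\<le>degree a. smult (coeff a l) (tpow q f l))"

context frob
begin

lemma mvec_mmul: "mvec q d (mmul q d A B) v = mvec q d A (mvec q d (B::'k tmat) v)"
proof (rule ext)
  fix i
  have "mvec q d (mmul q d A B) v i = (\<Sum>j<d. \<Sum>l<d. teval q (A i l) (teval q (B l j) (v j)))"
    by (simp add: mvec_def mmul_def teval_sum_poly teval_tmul)
  also have "\<dots> = (\<Sum>l<d. \<Sum>j<d. teval q (A i l) (teval q (B l j) (v j)))"
    by (rule sum.swap)
  also have "\<dots> = mvec q d A (mvec q d B v) i"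
    by (simp add: mvec_def teval_sum)
  finally show "mvec q d (mmul q d A B) v i = mvec q d A (mvec q d B v) i" .
qed

lemma mvec_vecs: "M \<in> mats e d' \<Longrightarrow> mvec q d (M::'k tmat) v \<in> vecs e"
  by (simp add: mats_def vecs_def mvec_def)

lemma mvec_mid: "v \<in> vecs d \<Longrightarrow> mvec q d (mid d) (v::nat \<Rightarrow> 'k) = v"
proof (rule ext)
  fix i assume v: "v \<in> vecs d"
  show "mvec q d (mid d) v i = v i"
  proof (cases "i < d")
    case True
    then show ?thesis unfolding mvec_def mid_def
      by (subst sum_single[of _ i]) (auto simp: teval_const[of 1, simplified one_pCons[symmetric]])
  next
    case False
    then show ?thesis using v by (simp add: mvec_def mid_def vecs_def)
  qed
qed

lemma mmul_mats: "A \<in> mats e k \<Longrightarrow> B \<in> mats k d \<Longrightarrow> mmul q k A (B::'k tmat) \<in> mats e d"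
  by (auto simp: mats_def mmul_def)

lemma mid_mats: "(mid d :: 'k tmat) \<in> mats d d"
  by (auto simp: mats_def mid_def)

lemma mpow_mats: "M \<in> mats d d \<Longrightarrow> mpow q d (M::'k tmat) l \<in> mats d d"
  by (induction l) (auto simp: mid_mats mmul_mats)

lemma mvec_mpow: "M \<in> mats d d \<Longrightarrow> v \<in> vecs d \<Longrightarrow> mvec q d (mpow q d (M::'k tmat) l) v = (mvec q d M ^^ l) v"
  by (induction l) (auto simp: mvec_mid mvec_mmul)

lemma mvec_tact: "mvec q d (tact q d (M::'k tmat) a) v = (\<lambda>r. \<Sum>i\<le>degree a. coeff a i * mvec q d (mpow q d M i) v r)"
proof (rule ext)
  fix r
  have "mvec q d (tact q d M a) v r = (\<Sum>j<d. \<Sum>i\<le>degree a. coeff a i * teval q (mpow q d M i r j) (v j))"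
    by (simp add: mvec_def tact_def teval_sum_poly teval_smult)
  also have "\<dots> = (\<Sum>i\<le>degree a. \<Sum>j<d. coeff a i * teval q (mpow q d M i r j) (v j))"
    by (rule sum.swap)
  also have "\<dots> = (\<Sum>i\<le>degree a. coeff a i * mvec q d (mpow q d M i) v r)"
    by (simp add: mvec_def sum_distrib_left)
  finally show "mvec q d (tact q d M a) v r = (\<Sum>i\<le>degree a. coeff a i * mvec q d (mpow q d M i) v r)" .
qed

lemma coeff0_mmul: "coeff (mmul q d A (B::'k tmat) i j) 0 = (\<Sum>l<d. coeff (A i l) 0 * coeff (B l j) 0)"
  by (simp add: mmul_def coeff_sum coeff_tmul_0)

lemma mmul_prodmod_left:
  "mmul q d (prodmod d f) (B::'k tmat) i j = (if i < d then tmul q (f i) (B i j) else 0)"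
proof (cases "i < d")
  case True
  then show ?thesis unfolding mmul_def prodmod_def
    by (subst sum_single[of _ i]) auto
qed (simp add: mmul_def prodmod_def)

lemma mmul_prodmod_right:
  "mmul q d (B::'k tmat) (prodmod d f) i j = (if j < d then tmul q (B i j) (f j) else 0)"
proof (cases "j < d")
  case True
  then show ?thesis unfolding mmul_def prodmod_def
    by (subst sum_single[of _ j]) auto
qed (simp add: mmul_def prodmod_def)

lemma mpow_prodmod: "mpow q d (prodmod d (f::nat \<Rightarrow> 'k poly)) l = prodmod d (\<lambda>i. tpow q (f i) l)"
proof (induction l)
  case 0
  then show ?case by (auto simp: mid_def prodmod_def)
next
  case (Suc l)
  show ?case
    by (simp only: mpow.simps Suc) (rule ext, rule ext, simp only: mmul_prodmod_left, simp add: prodmod_def)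
qed

lemma tact_prodmod: "tact q d (prodmod d (f::nat \<Rightarrow> 'k poly)) a = prodmod d (\<lambda>i. pa q (f i) a)"
  by (rule ext, rule ext) (simp add: tact_def mpow_prodmod, auto simp: prodmod_def pa_def intro!: sum.neutral)

lemma frob_minus: "(- (x::'k)) ^ q = - (x ^ q)"
  using frobn_minus[of x 1] by simp

lemma frob_sum: "(sum (f :: 'a \<Rightarrow> 'k) A) ^ q = (\<Sum>x\<in>A. f x ^ q)"
  using frobn_sum[of f A 1] by simp

lemma FqT_add: "a \<in> FqT q \<Longrightarrow> b \<in> FqT q \<Longrightarrow> (a::'k poly) + b \<in> FqT q"
  by (simp add: FqT_def frob_add)

lemma FqT_minus: "a \<in> FqT q \<Longrightarrow> - (a::'k poly) \<in> FqT q"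
  by (simp add: FqT_def frob_minus)

lemma FqT_diff: "a \<in> FqT q \<Longrightarrow> b \<in> FqT q \<Longrightarrow> (a::'k poly) - b \<in> FqT q"
  using FqT_add[of a "- b"] FqT_minus[of b] by simp

lemma FqT_mult: "a \<in> FqT q \<Longrightarrow> b \<in> FqT q \<Longrightarrow> (a::'k poly) * b \<in> FqT q"
  by (simp add: FqT_def coeff_mult frob_sum power_mult_distrib)

lemma FqT_smult: "c ^ q = c \<Longrightarrow> a \<in> FqT q \<Longrightarrow> smult (c::'k) a \<in> FqT q"
  by (simp add: FqT_def power_mult_distrib)

lemma FqT_pCons: "pCons c a \<in> FqT q \<longleftrightarrow> (c::'k) ^ q = c \<and> a \<in> FqT q"
proof
  assume h: "pCons c a \<in> FqT q"
  then have h': "\<forall>i. coeff (pCons c a) i ^ q = coeff (pCons c a) i"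
    unfolding FqT_def by simp
  have "c ^ q = c" using h'[rule_format, of 0] by simp
  moreover have "\<forall>i. coeff a i ^ q = coeff a i"
  proof
    fix i show "coeff a i ^ q = coeff a i" using h'[rule_format, of "Suc i"] by (simp only: coeff_pCons_Suc)
  qed
  ultimately show "c ^ q = c \<and> a \<in> FqT q" by (simp add: FqT_def)
next
  assume "c ^ q = c \<and> a \<in> FqT q"
  then show "pCons c a \<in> FqT q" by (auto simp: FqT_def coeff_pCons split: nat.splits)
qed

lemma FqT_zero [simp]: "(0::'k poly) \<in> FqT q"
  by (simp add: FqT_def)

lemma FqT_const: "(c::'k) ^ q = c \<Longrightarrow> [:c:] \<in> FqT q"
  by (simp add: FqT_pCons)

lemma FqT_one [simp]: "(1::'k poly) \<in> FqT q"
  by (simp add: one_pCons FqT_const)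

lemma FqT_t [simp]: "([:0, 1:]::'k poly) \<in> FqT q"
  by (simp add: FqT_pCons)

lemma FqT_coeff: "a \<in> FqT q \<Longrightarrow> coeff (a::'k poly) i ^ q = coeff a i"
  by (simp add: FqT_def)

lemma tpow_Suc': "tpow q (f::'k poly) (Suc l) = tmul q (tpow q f l) f"
proof (induction l)
  case 0 then show ?case by simp
next
  case (Suc l)
  have "tpow q f (Suc (Suc l)) = tmul q f (tmul q (tpow q f l) f)" using Suc by simp
  also have "\<dots> = tmul q (tpow q f (Suc l)) f" by (simp add: tmul_assoc)
  finally show ?case .
qed

lemma tpow_comm: "tmul q (f::'k poly) (tpow q f l) = tmul q (tpow q f l) f"
  using tpow_Suc'[of f l] by simp

lemma pa_ext: "degree a < N \<Longrightarrow> pa q (f::'k poly) a = (\<Sum>l<N. smult (coeff a l) (tpow q f l))"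
  unfolding pa_def by (intro sum.mono_neutral_left) (auto simp: coeff_eq_0)

lemma pa_add: "pa q (f::'k poly) (a + b) = pa q f a + pa q f b"
proof -
  let ?N = "Suc (max (degree a) (degree b))"
  have "degree (a + b) < ?N" using degree_add_le_max[of a b] by simp
  then show ?thesis
    by (simp add: pa_ext[of _ ?N] smult_add_left sum.distrib)
qed

lemma smult_sumr: "smult c (\<Sum>i\<in>A. F i) = (\<Sum>i\<in>A. smult (c::'k) (F i))"
  by (induction A rule: infinite_finite_induct) (auto simp: smult_add_right)

lemma pa_smult: "pa q (f::'k poly) (smult c a) = smult c (pa q f a)"
proof -
  have "degree (smult c a) < Suc (degree a)" using degree_smult_le[of c a] by simp
  then show ?thesis
    by (simp only: pa_ext[of _ "Suc (degree a)"] coeff_smult smult_sumr smult_smult[symmetric] lessI)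
qed

lemma pa_zero [simp]: "pa q (f::'k poly) 0 = 0"
  by (simp add: pa_def)

lemma pa_const: "pa q (f::'k poly) [:c:] = [:c:]"
  by (simp add: pa_def)

lemma pa_one [simp]: "pa q (f::'k poly) 1 = 1"
  by (simp add: pa_def)

lemma pa_t [simp]: "pa q (f::'k poly) [:0, 1:] = f"
  by (simp add: pa_def)

lemma pa_pCons0: "pa q (f::'k poly) (pCons 0 a) = tmul q (pa q f a) f"
proof -
  let ?N = "Suc (degree a)"
  have d: "degree (pCons 0 a) < Suc ?N" by (simp add: degree_pCons_le le_imp_less_Suc)
  have "pa q f (pCons 0 a) = (\<Sum>l<Suc ?N. smult (coeff (pCons 0 a) l) (tpow q f l))"
    using pa_ext[OF d] .
  also have "\<dots> = (\<Sum>l<?N. smult (coeff a l) (tpow q f (Suc l)))"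
    by (subst sum.lessThan_Suc_shift) simp
  also have "\<dots> = (\<Sum>l<?N. tmul q (smult (coeff a l) (tpow q f l)) f)"
    by (simp add: tpow_Suc' tmul_smult_left del: tpow.simps)
  also have "\<dots> = tmul q (pa q f a) f"
    by (simp only: pa_ext[of a ?N, OF lessI] tmul_sum_left)
  finally show ?thesis .
qed

lemma pCons_split: "pCons c a = [:c:] + pCons 0 (a::'k poly)"
  by simp

lemma pa_pCons: "pa q (f::'k poly) (pCons c a) = [:c:] + tmul q (pa q f a) f"
  by (subst pCons_split) (simp only: pa_add pa_const pa_pCons0)

lemma pa_comm: "a \<in> FqT q \<Longrightarrow> tmul q (f::'k poly) (pa q f a) = tmul q (pa q f a) f"
  unfolding pa_def
  by (simp add: tmul_sum_left tmul_sum_right tmul_smult_left tmul_smult_right FqT_coeff tpow_comm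
      del: tpow.simps)

lemma pa_mult: "a \<in> FqT q \<Longrightarrow> b \<in> FqT q \<Longrightarrow> pa q (f::'k poly) (a * b) = tmul q (pa q f a) (pa q f b)"
proof (induction a rule: pCons_induct)
  case 0 then show ?case by simp
next
  case (pCons c a)
  from pCons.prems have c: "c ^ q = c" and a: "a \<in> FqT q" by (auto simp: FqT_pCons)
  have ab: "a * b \<in> FqT q" using a pCons.prems by (simp add: FqT_mult)
  have "pa q f (pCons c a * b) = pa q f (smult c b + pCons 0 (a * b))" by simp
  also have "\<dots> = smult c (pa q f b) + tmul q (tmul q (pa q f a) (pa q f b)) f"
    by (simp add: pa_add pa_smult pa_pCons0 pCons.IH[OF a pCons.prems(2)])
  also have "\<dots> = smult c (pa q f b) + tmul q (pa q f a) (tmul q f (pa q f b))"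
    by (simp add: tmul_assoc pa_comm[OF pCons.prems(2)])
  also have "\<dots> = tmul q (pa q f (pCons c a)) (pa q f b)"
    by (simp add: pa_pCons tmul_add_left tmul_const_left tmul_assoc)
  finally show ?case .
qed

end



definition Lop :: "nat \<Rightarrow> 'k::field poly \<Rightarrow> 'k poly \<Rightarrow> 'k poly \<Rightarrow> 'k poly" where
  "Lop q phi psi U = tmul q U phi - tmul q psi U"

definition isred :: "'k::field poly \<Rightarrow> 'k poly \<Rightarrow> bool" where
  "isred phi R \<longleftrightarrow> (\<forall>l\<ge>degree phi. coeff R l = 0)"

definition red :: "nat \<Rightarrow> 'k::field poly \<Rightarrow> 'k poly \<Rightarrow> 'k poly \<Rightarrow> 'k poly" where
  "red q phi psi X = (SOME R. isred phi R \<and> (\<exists>U. X = R + Lop q phi psi U))"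

definition cst :: "nat \<Rightarrow> 'k::field poly \<Rightarrow> nat \<Rightarrow> 'k" where
  "cst q phi j = inverse (lead_coeff phi ^ (q ^ j))"

locale scal = frob q tyk for q and tyk :: "'k::field itself" +
  fixes phi psi :: "'k poly"
  assumes deg_lt: "degree psi < degree phi"
begin

abbreviation "rk \<equiv> degree phi"
abbreviation "sk \<equiv> degree psi"
abbreviation "L \<equiv> Lop q phi psi"

lemma phi_nz: "phi \<noteq> 0"
  using deg_lt by auto

lemma rk_pos: "0 < rk"
  using deg_lt by simp

lemma L_add: "L (U + V) = L U + L V"
  by (simp add: Lop_def tmul_add_left tmul_add_right)

lemma L_zero [simp]: "L 0 = 0"
  by (simp add: Lop_def)

lemma L_minus: "L (- U) = - L U"
  by (simp add: Lop_def tmul_minus_left tmul_minus_right)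

lemma L_diff: "L (U - V) = L U - L V"
  using L_add[of U "- V"] by (simp add: L_minus)

lemma L_smult: "c ^ q = c \<Longrightarrow> L (smult c U) = smult c (L U)"
  by (simp add: Lop_def tmul_smult_left tmul_smult_right smult_diff_right)

lemma coeff_L_monom:
  "coeff (L (monom u j)) l =
     (if j \<le> l then u * coeff phi (l - j) ^ (q ^ j) - coeff psi (l - j) * u ^ (q ^ (l - j)) else 0)"
  by (simp add: Lop_def coeff_tmul_monom_left coeff_tmul_monom_right)

lemma L_nz:
  assumes "U \<noteq> 0"
  shows "coeff (L U) (degree U + rk) \<noteq> 0"
proof -
  have "coeff (tmul q U phi) (degree U + rk) = lead_coeff U * lead_coeff phi ^ (q ^ degree U)"
    by (rule coeff_tmul_top)
  moreover have "lead_coeff U * lead_coeff phi ^ (q ^ degree U) \<noteq> 0"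
    using assms phi_nz by simp
  moreover have "coeff (tmul q psi U) (degree U + rk) = 0"
    using deg_lt by (intro coeff_tmul_high) simp
  ultimately show ?thesis by (simp add: Lop_def)
qed

lemma red_step:
  assumes N: "rk \<le> N" and X: "\<forall>l>N. coeff X l = 0"
  shows "\<forall>l\<ge>N. coeff (X - L (monom (coeff X N * cst q phi (N - rk)) (N - rk))) l = 0"
proof (intro allI impI)
  fix l assume l: "N \<le> l"
  let ?j = "N - rk" and ?u = "coeff X N * cst q phi (N - rk)"
  have jl: "?j \<le> l" using l by simp
  show "coeff (X - L (monom ?u ?j)) l = 0"
  proof (cases "l = N")
    case True
    have e: "N - ?j = rk" using N by simp
    have "lead_coeff phi ^ (q ^ ?j) \<noteq> 0" using phi_nz by simp
    then have "?u * coeff phi rk ^ (q ^ ?j) = coeff X N"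
      by (simp add: cst_def)
    moreover have "coeff psi rk = 0" using deg_lt by (simp add: coeff_eq_0)
    ultimately show ?thesis using True by (simp add: coeff_L_monom e)
  next
    case False
    then have "N < l" using l by simp
    then have "rk < l - ?j" "sk < l - ?j" using N deg_lt by linarith+
    then have "coeff phi (l - ?j) = 0" "coeff psi (l - ?j) = 0" by (simp_all add: coeff_eq_0)
    then show ?thesis using X \<open>N < l\<close> jl by (simp add: coeff_L_monom)
  qed
qed

lemma red_exists: "\<exists>U R. isred phi R \<and> X = R + L U"
proof (induction "degree X" arbitrary: X rule: less_induct)
  case less
  show ?case
  proof (cases "degree X < rk")
    case True
    then have "isred phi X" by (auto simp: isred_def coeff_eq_0)
    then show ?thesis by (intro exI[of _ 0] exI[of _ X]) simp
  next
    case False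
    let ?N = "degree X"
    let ?U = "monom (coeff X ?N * cst q phi (?N - rk)) (?N - rk)"
    let ?X' = "X - L ?U"
    have "\<forall>l\<ge>?N. coeff ?X' l = 0"
      using False by (intro red_step) (auto simp: coeff_eq_0)
    moreover have "0 < ?N" using False rk_pos by linarith
    ultimately have "degree ?X' < ?N"
    proof -
      assume h: "\<forall>l\<ge>?N. coeff ?X' l = 0" "0 < ?N"
      have "degree ?X' \<le> ?N - 1"
      proof (rule degree_le, intro allI impI)
        fix i assume "?N - 1 < i"
        then have "?N \<le> i" using h(2) by linarith
        then show "coeff ?X' i = 0" using h(1) by blast
      qed
      then show ?thesis using h(2) by linarith
    qed
    then obtain U R where "isred phi R" and e: "?X' = R + L U" using less by blast
    from e have "X = R + L U + L ?U" by (rule diff_eq_eq[THEN iffD1])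
    then have "X = R + L (U + ?U)" by (metis L_add add.assoc)
    then have "isred phi R \<and> X = R + L (U + ?U)" using \<open>isred phi R\<close> by blast
    then show ?thesis by blast
  qed
qed

lemma red_uniq:
  assumes "isred phi R1" "isred phi R2" "R1 + L U1 = R2 + L U2"
  shows "R1 = R2"
proof (cases "U2 - U1 = 0")
  case True
  then show ?thesis using assms by simp
next
  case False
  have "R1 - R2 = L (U2 - U1)" using assms(3) by (simp add: L_diff algebra_simps)
  then have "coeff (R1 - R2) (degree (U2 - U1) + rk) \<noteq> 0" using L_nz[OF False] by simp
  moreover have "coeff (R1 - R2) (degree (U2 - U1) + rk) = 0"
    using assms(1,2) by (simp add: isred_def)
  ultimately show ?thesis by simp
qed

lemma red_spec: "isred phi (red q phi psi X) \<and> (\<exists>U. X = red q phi psi X + L U)"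
proof -
  obtain U R where "isred phi R \<and> X = R + L U" using red_exists by blast
  then have "\<exists>R. isred phi R \<and> (\<exists>U. X = R + L U)" by blast
  then show ?thesis unfolding red_def by (rule someI_ex)
qed

lemma red_isred: "isred phi (red q phi psi X)"
  using red_spec by blast

lemma red_eq:
  assumes "isred phi R" "X = R + L U"
  shows "red q phi psi X = R"
proof -
  obtain U' where "X = red q phi psi X + L U'" using red_spec by blast
  then have "red q phi psi X + L U' = R + L U" using assms(2) by simp
  then show ?thesis using red_uniq[OF red_isred[of X] assms(1)] by blast
qed

lemma isred_add: "isred phi A \<Longrightarrow> isred phi B \<Longrightarrow> isred phi (A + B)"
  by (simp add: isred_def)

lemma isred_smult: "isred phi A \<Longrightarrow> isred phi (smult c A)"
  by (simp add: isred_def)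

lemma isred_zero [simp]: "isred phi 0"
  by (simp add: isred_def)

lemma isred_sum: "(\<And>i. i \<in> A \<Longrightarrow> isred phi (F i)) \<Longrightarrow> isred phi (\<Sum>i\<in>A. F i)"
  by (induction A rule: infinite_finite_induct) (auto intro: isred_add)

lemma red_of_isred: "isred phi R \<Longrightarrow> red q phi psi R = R"
  by (rule red_eq[of R R 0]) simp_all

lemma aux_add: "A = a + L U \<Longrightarrow> B = b + L V \<Longrightarrow> A + B = (a + b) + L (U + V)"
  by (simp add: L_add algebra_simps)

lemma aux_smult: "c ^ q = c \<Longrightarrow> A = a + L U \<Longrightarrow> smult c A = smult c a + L (smult c U)"
  by (simp add: L_smult smult_add_right)

lemma aux_psi: "A = a + L U \<Longrightarrow> tmul q psi A = tmul q psi a + L (tmul q psi U)"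
  by (simp add: Lop_def tmul_diff_right tmul_add_right tmul_assoc)

lemma red_add: "red q phi psi (X + Y) = red q phi psi X + red q phi psi Y"
proof -
  obtain U V where "X = red q phi psi X + L U" "Y = red q phi psi Y + L V" using red_spec by blast
  then have "X + Y = (red q phi psi X + red q phi psi Y) + L (U + V)" by (rule aux_add)
  then show ?thesis by (intro red_eq) (auto intro: isred_add red_isred)
qed

lemma red_zero [simp]: "red q phi psi 0 = 0"
  by (rule red_of_isred) simp

lemma red_L: "red q phi psi (X + L U) = red q phi psi X"
proof -
  have "red q phi psi (L U) = 0" by (rule red_eq[of 0 _ U]) simp_all
  then show ?thesis by (simp add: red_add)
qed

lemma red_smult: "c ^ q = c \<Longrightarrow> red q phi psi (smult c X) = smult c (red q phi psi X)"
proof -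
  assume c: "c ^ q = c"
  obtain U where "X = red q phi psi X + L U" using red_spec by blast
  then have "smult c X = smult c (red q phi psi X) + L (smult c U)"
    by (rule aux_smult[OF c])
  then show ?thesis by (intro red_eq) (auto intro: isred_smult red_isred)
qed

lemma red_sum: "(\<And>i. i \<in> A \<Longrightarrow> c i ^ q = c i) \<Longrightarrow>
   red q phi psi (\<Sum>i\<in>A. smult (c i) (Y i)) = (\<Sum>i\<in>A. smult (c i) (red q phi psi (Y i)))"
  by (induction A rule: infinite_finite_induct) (auto simp: red_add red_smult)

lemma red_psi: "red q phi psi (tmul q psi Y) = red q phi psi (tmul q psi (red q phi psi Y))"
proof -
  obtain U where U: "Y = red q phi psi Y + L U" using red_spec by blast
  have "tmul q psi Y = tmul q psi (red q phi psi Y) + L (tmul q psi U)"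
    using U by (rule aux_psi)
  then show ?thesis by (simp add: red_L)
qed

lemma isred_coeff: "isred phi R \<Longrightarrow> rk \<le> l \<Longrightarrow> coeff R l = 0"
  by (simp add: isred_def)

lemma isred_eqI: "isred phi A \<Longrightarrow> isred phi B \<Longrightarrow> (\<And>l. l < rk \<Longrightarrow> coeff A l = coeff B l) \<Longrightarrow> A = B"
proof (rule poly_eqI)
  fix l assume a: "isred phi A" "isred phi B" "\<And>l. l < rk \<Longrightarrow> coeff A l = coeff B l"
  show "coeff A l = coeff B l"
  proof (cases "l < rk")
    case False
    then show ?thesis using a(1,2) by (simp add: isred_def)
  qed (use a in auto)
qed

end



definition rstep :: "nat \<Rightarrow> 'k::field poly \<Rightarrow> 'k poly \<Rightarrow> nat \<Rightarrow> (nat \<Rightarrow> 'k) \<Rightarrow> (nat \<Rightarrow> 'k)" where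
  "rstep q phi psi N v = (\<lambda>l. v l - coeff (Lop q phi psi
      (monom (v N * cst q phi (N - degree phi)) (N - degree phi))) l)"

fun rit :: "nat \<Rightarrow> 'k::field poly \<Rightarrow> 'k poly \<Rightarrow> nat \<Rightarrow> (nat \<Rightarrow> 'k) \<Rightarrow> (nat \<Rightarrow> 'k)" where
  "rit q phi psi 0 v = v"
| "rit q phi psi (Suc k) v = rit q phi psi k (rstep q phi psi (degree phi + k) v)"

definition M0 :: "'k::field poly \<Rightarrow> nat \<Rightarrow> 'k tmat" where
  "M0 psi W = (\<lambda>n l. if n < W \<and> l \<le> n then monom (coeff psi (n - l)) (n - l) else 0)"

definition Ecol :: "nat \<Rightarrow> 'k::field poly \<Rightarrow> 'k poly \<Rightarrow> nat \<Rightarrow> nat \<Rightarrow> 'k poly" where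
  "Ecol q phi psi j l = monom (- (cst q phi j * coeff phi (l - j) ^ (q ^ j))) 0
      + monom (coeff psi (l - j) * cst q phi j ^ (q ^ (l - j))) (l - j)"

definition Smat :: "nat \<Rightarrow> 'k::field poly \<Rightarrow> 'k poly \<Rightarrow> nat \<Rightarrow> nat \<Rightarrow> 'k tmat" where
  "Smat q phi psi W N = (\<lambda>l l'. if l < W \<and> l' < W then
      (if l = l' then 1 else 0) +
      (if l' = N \<and> N - degree phi \<le> l then Ecol q phi psi (N - degree phi) l else 0) else 0)"

definition rep :: "nat \<Rightarrow> nat \<Rightarrow> nat \<Rightarrow> ((nat \<Rightarrow> 'k::field) \<Rightarrow> (nat \<Rightarrow> 'k)) \<Rightarrow> 'k \<Rightarrow> bool" where
  "rep q W r G c \<longleftrightarrow> (\<exists>M\<in>mats W W. (\<forall>v\<in>vecs W. G v = mvec q W M v) \<and>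
      (\<forall>l l'. l' < r \<longrightarrow> coeff (M l l') 0 = (if l = l' then c else 0)))"

context frob
begin

lemma rep_comp:
  assumes "r \<le> W" "rep q W r (G::(nat \<Rightarrow> 'k) \<Rightarrow> _) c1" "rep q W r H c2"
  shows "rep q W r (G \<circ> H) (c1 * c2)"
proof -
  obtain M where M: "M \<in> mats W W" "\<forall>v\<in>vecs W. G v = mvec q W M v"
    "\<forall>l l'. l' < r \<longrightarrow> coeff (M l l') 0 = (if l = l' then c1 else 0)"
    using assms(2) unfolding rep_def by blast
  obtain M' where M': "M' \<in> mats W W" "\<forall>v\<in>vecs W. H v = mvec q W M' v"
    "\<forall>l l'. l' < r \<longrightarrow> coeff (M' l l') 0 = (if l = l' then c2 else 0)"
    using assms(3) unfolding rep_def by blast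
  show ?thesis unfolding rep_def
  proof (intro bexI conjI allI impI ballI)
    show "mmul q W M M' \<in> mats W W" using M(1) M'(1) by (rule mmul_mats)
    fix v :: "nat \<Rightarrow> 'k" assume v: "v \<in> vecs W"
    have "H v \<in> vecs W" using M'(2) v mvec_vecs[OF M'(1)] by simp
    then show "(G \<circ> H) v = mvec q W (mmul q W M M') v"
      using M(2) M'(2) v by (simp add: mvec_mmul)
  next
    fix l l' :: nat assume l': "l' < r"
    have "coeff (mmul q W M M' l l') 0 = (\<Sum>k<W. coeff (M l k) 0 * coeff (M' k l') 0)"
      by (rule coeff0_mmul)
    also have "\<dots> = coeff (M l l') 0 * coeff (M' l' l') 0"
      using l' assms(1) M'(3) by (subst sum_single[of _ l']) auto
    also have "\<dots> = (if l = l' then c1 * c2 else 0)"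
      using l' M(3) M'(3) by simp
    finally show "coeff (mmul q W M M' l l') 0 = (if l = l' then c1 * c2 else 0)" .
  qed
qed

lemma rep_id:
  assumes "r \<le> W" shows "rep q W r (id :: (nat \<Rightarrow> 'k) \<Rightarrow> _) 1"
  unfolding rep_def
proof (intro bexI conjI allI impI ballI)
  show "(mid W :: 'k tmat) \<in> mats W W" by (rule mid_mats)
  fix v :: "nat \<Rightarrow> 'k" assume "v \<in> vecs W"
  then show "id v = mvec q W (mid W) v" by (simp add: mvec_mid)
next
  fix l l' :: nat assume "l' < r"
  then show "coeff ((mid W :: 'k tmat) l l') 0 = (if l = l' then 1 else 0)"
    using assms by (simp add: mid_def)
qed

end

context scal
begin

abbreviation "W \<equiv> rk + sk"

lemma teval_Ecol:
  "teval q (Ecol q phi psi j l) x =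
     - (x * cst q phi j * coeff phi (l - j) ^ (q ^ j)) + coeff psi (l - j) * (x * cst q phi j) ^ (q ^ (l - j))"
  by (simp add: Ecol_def teval_add_poly teval_monom power_mult_distrib ac_simps)

lemma rep_step:
  assumes N: "rk \<le> N" "N < W"
  shows "rep q W rk (rstep q phi psi N) 1"
  unfolding rep_def
proof (intro bexI conjI allI impI ballI)
  show "Smat q phi psi W N \<in> mats W W" by (auto simp: mats_def Smat_def)
next
  fix l l' :: nat assume "l' < rk"
  then show "coeff (Smat q phi psi W N l l') 0 = (if l = l' then 1 else 0)"
    using N by (auto simp: Smat_def)
next
  fix v :: "nat \<Rightarrow> 'k" assume v: "v \<in> vecs W"
  let ?j = "N - rk" and ?u = "v N * cst q phi (N - rk)"
  show "rstep q phi psi N v = mvec q W (Smat q phi psi W N) v"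
  proof (rule ext)
    fix l
    show "rstep q phi psi N v l = mvec q W (Smat q phi psi W N) v l"
    proof (cases "l < W")
      case True
      have "mvec q W (Smat q phi psi W N) v l =
          (\<Sum>l'<W. teval q (if l = l' then 1 else 0) (v l')) +
          (\<Sum>l'<W. teval q (if l' = N \<and> ?j \<le> l then Ecol q phi psi ?j l else 0) (v l'))"
        using True by (simp add: mvec_def Smat_def teval_add_poly sum.distrib)
      also have "(\<Sum>l'<W. teval q (if l = l' then 1 else 0) (v l')) = v l"
        using True by (subst sum_single[of _ l]) (auto simp: teval_const[of 1, simplified one_pCons[symmetric]])
      also have "(\<Sum>l'<W. teval q (if l' = N \<and> ?j \<le> l then Ecol q phi psi ?j l else 0) (v l')) =
          (if ?j \<le> l then teval q (Ecol q phi psi ?j l) (v N) else 0)"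
        using N by (subst sum_single[of _ N]) auto
      finally show ?thesis
        by (cases "?j \<le> l") (simp_all add: rstep_def coeff_L_monom teval_Ecol algebra_simps)
    next
      case False
      then have "v l = 0" using v by (simp add: vecs_def)
      moreover have "rk < l - ?j" "sk < l - ?j" using False N deg_lt by linarith+
      then have "coeff phi (l - ?j) = 0" "coeff psi (l - ?j) = 0" by (simp_all add: coeff_eq_0)
      ultimately show ?thesis using False by (simp add: rstep_def coeff_L_monom mvec_def Smat_def)
    qed
  qed
qed

lemma rit_Suc_comp: "rit q phi psi (Suc k) = rit q phi psi k \<circ> rstep q phi psi (rk + k)"
  by (rule ext) simp

lemma rep_rit: "k \<le> sk \<Longrightarrow> rep q W rk (rit q phi psi k) 1"
proof (induction k)
  case 0
  have "rit q phi psi 0 = id" by (rule ext) simp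
  then show ?case using rep_id[of rk W] by (simp only:)
next
  case (Suc k)
  have "rep q W rk (rit q phi psi k \<circ> rstep q phi psi (rk + k)) (1 * 1)"
    using Suc by (intro rep_comp rep_step) auto
  then show ?case by (simp only: rit_Suc_comp mult_1)
qed

lemma rep_M0: "rep q W rk (mvec q W (M0 psi W)) (coeff psi 0)"
  unfolding rep_def
proof (intro bexI conjI allI impI ballI)
  show "M0 psi W \<in> mats W W" by (auto simp: mats_def M0_def)
next
  fix v :: "nat \<Rightarrow> 'k" show "mvec q W (M0 psi W) v = mvec q W (M0 psi W) v" ..
next
  fix l l' :: nat assume "l' < rk"
  then show "coeff (M0 psi W l l') 0 = (if l = l' then coeff psi 0 else 0)"
    by (auto simp: M0_def coeff_monom)
qed

lemma isred_degree: "isred phi R \<Longrightarrow> degree R < rk"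
proof -
  assume R: "isred phi R"
  have "degree R \<le> rk - 1"
    by (rule degree_le) (use R rk_pos in \<open>auto simp: isred_def\<close>)
  then show ?thesis using rk_pos by linarith
qed

lemma M0_correct:
  assumes R: "isred phi R"
  shows "mvec q W (M0 psi W) (coeff R) = coeff (tmul q psi R)"
proof (rule ext)
  fix n
  show "mvec q W (M0 psi W) (coeff R) n = coeff (tmul q psi R) n"
  proof (cases "n < W")
    case True
    have "mvec q W (M0 psi W) (coeff R) n = (\<Sum>l<W. if l \<le> n then coeff psi (n - l) * coeff R l ^ (q ^ (n - l)) else 0)"
      using True by (auto simp: mvec_def M0_def teval_monom intro!: sum.cong)
    also have "\<dots> = (\<Sum>l\<le>n. coeff psi (n - l) * coeff R l ^ (q ^ (n - l)))"
    proof -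
      have "(\<Sum>l<W. if l \<le> n then coeff psi (n - l) * coeff R l ^ (q ^ (n - l)) else 0) =
          (\<Sum>l\<le>n. if l \<le> n then coeff psi (n - l) * coeff R l ^ (q ^ (n - l)) else 0)"
        using True by (intro sum.mono_neutral_right) auto
      then show ?thesis by simp
    qed
    also have "\<dots> = (\<Sum>i\<le>n. coeff psi i * coeff R (n - i) ^ (q ^ i))"
      by (rule sum.reindex_bij_witness[where i="\<lambda>i. n - i" and j="\<lambda>i. n - i"]) auto
    also have "\<dots> = coeff (tmul q psi R) n" by (simp add: coeff_tmul)
    finally show ?thesis .
  next
    case False
    have "degree R < rk" using R by (rule isred_degree)
    then have "coeff (tmul q psi R) n = 0" using False by (intro coeff_tmul_high) linarith
    then show ?thesis using False by (simp add: mvec_def M0_def)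
  qed
qed

lemma rit_correct:
  "\<forall>Y. (\<forall>l\<ge>rk + k. coeff Y l = 0) \<longrightarrow>
     (\<exists>Z U. rit q phi psi k (coeff Y) = coeff Z \<and> Y = Z + L U \<and> isred phi Z)"
proof (induction k)
  case 0
  show ?case
  proof (intro allI impI)
    fix Y :: "'k poly" assume "\<forall>l\<ge>rk + 0. coeff Y l = 0"
    then have "isred phi Y" by (simp add: isred_def)
    then show "\<exists>Z U. rit q phi psi 0 (coeff Y) = coeff Z \<and> Y = Z + L U \<and> isred phi Z"
      by (intro exI[of _ Y] exI[of _ 0]) simp
  qed
next
  case (Suc k)
  show ?case
  proof (intro allI impI)
    fix Y :: "'k poly" assume Y: "\<forall>l\<ge>rk + Suc k. coeff Y l = 0"
    let ?V = "monom (coeff Y (rk + k) * cst q phi k) k"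
    define Y' where "Y' = Y - L ?V"
    have e1: "rstep q phi psi (rk + k) (coeff Y) = coeff Y'"
      by (rule ext) (simp add: rstep_def Y'_def)
    have st: "\<forall>l>rk + k. coeff Y l = 0" using Y by auto
    have "\<forall>l\<ge>rk + k. coeff Y' l = 0"
      using red_step[OF le_add1 st] unfolding Y'_def add_diff_cancel_left' .
    then obtain Z U where ZU: "rit q phi psi k (coeff Y') = coeff Z" "Y' = Z + L U" "isred phi Z"
      using Suc by blast
    have hY: "Y = Z + L (U + ?V)"
    proof -
      have "Y = Y' + L ?V" by (simp add: Y'_def)
      also have "\<dots> = Z + L (U + ?V)" using ZU(2) by (simp add: L_add add.assoc)
      finally show ?thesis .
    qed
    have "rit q phi psi (Suc k) (coeff Y) = coeff Z" using e1 ZU(1) by simp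
    then show "\<exists>Z U. rit q phi psi (Suc k) (coeff Y) = coeff Z \<and> Y = Z + L U \<and> isred phi Z"
      using hY ZU(3) by blast
  qed
qed

lemma P_exists:
  "\<exists>P\<in>mats rk rk. (\<forall>l l'. coeff (P l l') 0 = (if l = l' \<and> l < rk then coeff psi 0 else 0)) \<and>
     (\<forall>Y. mvec q rk P (coeff (red q phi psi Y)) = coeff (red q phi psi (tmul q psi Y)))"
proof -
  have "rep q W rk (rit q phi psi sk \<circ> mvec q W (M0 psi W)) (1 * coeff psi 0)"
    by (intro rep_comp rep_rit rep_M0) auto
  then obtain C where C: "C \<in> mats W W"
    "\<forall>v\<in>vecs W. (rit q phi psi sk \<circ> mvec q W (M0 psi W)) v = mvec q W C v"
    "\<forall>l l'. l' < rk \<longrightarrow> coeff (C l l') 0 = (if l = l' then coeff psi 0 else 0)"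
    unfolding rep_def by auto
  define P where "P = (\<lambda>l l'. if l < rk \<and> l' < rk then C l l' else 0)"
  have Pm: "P \<in> mats rk rk" by (auto simp: P_def mats_def)
  have Pc: "\<forall>l l'. coeff (P l l') 0 = (if l = l' \<and> l < rk then coeff psi 0 else 0)"
    using C(3) by (auto simp: P_def)
  have Pred: "mvec q rk P (coeff R) = coeff (red q phi psi (tmul q psi R))" if R: "isred phi R" for R
  proof -
    have vR: "coeff R \<in> vecs W" using R by (simp add: vecs_def isred_def)
    have dR: "degree R < rk" using R by (rule isred_degree)
    have "\<forall>l\<ge>rk + sk. coeff (tmul q psi R) l = 0"
      using dR by (auto intro!: coeff_tmul_high)
    then obtain Z U where ZU: "rit q phi psi sk (coeff (tmul q psi R)) = coeff Z"
       "tmul q psi R = Z + L U" "isred phi Z"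
      using rit_correct by blast
    have redZ: "red q phi psi (tmul q psi R) = Z" using ZU(2,3) by (intro red_eq) auto
    have "mvec q W C (coeff R) = rit q phi psi sk (mvec q W (M0 psi W) (coeff R))"
      using C(2) vR by auto
    then have y: "mvec q W C (coeff R) = coeff Z"
      using ZU(1) M0_correct[OF R] by simp
    show ?thesis
    proof (rule ext)
      fix l
      show "mvec q rk P (coeff R) l = coeff (red q phi psi (tmul q psi R)) l"
      proof (cases "l < rk")
        case True
        have "mvec q rk P (coeff R) l = (\<Sum>l'<rk. teval q (C l l') (coeff R l'))"
          using True by (auto simp: mvec_def P_def intro!: sum.cong)
        also have "\<dots> = (\<Sum>l'<W. teval q (C l l') (coeff R l'))"
          using R by (intro sum.mono_neutral_left) (auto simp: isred_def)
        also have "\<dots> = mvec q W C (coeff R) l" by (simp add: mvec_def)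
        finally show ?thesis using y redZ by simp
      next
        case False
        then show ?thesis using redZ ZU(3) by (simp add: mvec_def P_def isred_def)
      qed
    qed
  qed
  show ?thesis
  proof (intro bexI conjI allI)
    fix Y
    show "mvec q rk P (coeff (red q phi psi Y)) = coeff (red q phi psi (tmul q psi Y))"
      using Pred[OF red_isred[of Y]] red_psi[of Y] by simp
  qed (use Pm Pc in auto)
qed

end



definition sder :: "nat \<Rightarrow> 'k::field poly \<Rightarrow> 'k poly \<Rightarrow> ('k poly \<Rightarrow> 'k poly) \<Rightarrow> bool" where
  "sder q phi psi d \<longleftrightarrow>
     (\<forall>a\<in>FqT q. \<forall>b\<in>FqT q. d (a + b) = d a + d b) \<and>
     (\<forall>c a. c ^ q = c \<longrightarrow> a \<in> FqT q \<longrightarrow> d (smult c a) = smult c (d a)) \<and>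
     (\<forall>a\<in>FqT q. \<forall>b\<in>FqT q. d (a * b) = tmul q (pa q psi a) (d b) + tmul q (d a) (pa q phi b))"

fun Dl :: "nat \<Rightarrow> 'k::field poly \<Rightarrow> 'k poly \<Rightarrow> 'k poly \<Rightarrow> nat \<Rightarrow> 'k poly" where
  "Dl q phi psi M 0 = 0"
| "Dl q phi psi M (Suc l) = tmul q psi (Dl q phi psi M l) + tmul q M (tpow q phi l)"

definition dsc :: "nat \<Rightarrow> 'k::field poly \<Rightarrow> 'k poly \<Rightarrow> 'k poly \<Rightarrow> 'k poly \<Rightarrow> 'k poly" where
  "dsc q phi psi M a = (\<Sum>l\<le>degree a. smult (coeff a l) (Dl q phi psi M l))"

context frob
begin

lemma sder_zero_t:
  assumes d: "sder q phi psi d" and t: "d [:0, 1:] = (0::'k poly)"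
  shows "a \<in> FqT q \<Longrightarrow> d a = 0"
proof -
  have add: "\<And>a b. a \<in> FqT q \<Longrightarrow> b \<in> FqT q \<Longrightarrow> d (a + b) = d a + d b"
    using d by (simp add: sder_def)
  have sm: "\<And>c a. c ^ q = c \<Longrightarrow> a \<in> FqT q \<Longrightarrow> d (smult c a) = smult c (d a)"
    using d by (simp add: sder_def)
  have lb: "\<And>a b. a \<in> FqT q \<Longrightarrow> b \<in> FqT q \<Longrightarrow>
      d (a * b) = tmul q (pa q psi a) (d b) + tmul q (d a) (pa q phi b)"
    using d by (simp add: sder_def)
  have "d 0 = d 0 + d 0" using add[of 0 0] by simp
  then have d0: "d 0 = 0" by (metis add.right_neutral add_left_cancel)
  have "d 1 = d 1 + d 1" using lb[of 1 1] by simp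
  then have d1: "d 1 = 0" by (metis add.right_neutral add_left_cancel)
  show "a \<in> FqT q \<Longrightarrow> d a = 0"
  proof (induction a rule: pCons_induct)
    case 0 show ?case by (rule d0)
  next
    case (pCons c a)
    from pCons.prems have c: "c ^ q = c" and a: "a \<in> FqT q" by (auto simp: FqT_pCons)
    have e: "pCons c a = smult c 1 + a * [:0, 1:]" by simp
    have f1: "smult c 1 \<in> FqT q" using c by (intro FqT_smult) auto
    have f2: "a * [:0, 1:] \<in> FqT q" using a by (intro FqT_mult) auto
    have "d (pCons c a) = d (smult c 1) + d (a * [:0, 1:])" unfolding e using f1 f2 by (rule add)
    also have "\<dots> = 0" using sm[OF c FqT_one] lb[OF a FqT_t] d1 t pCons.IH[OF a] by simp
    finally show ?case .
  qed
qed

lemma sder_diff: "sder q phi psi d1 \<Longrightarrow> sder q phi psi d2 \<Longrightarrow> sder q phi psi (\<lambda>a. d1 a - (d2 a :: 'k poly))"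
  unfolding sder_def
  by (simp add: tmul_diff_left tmul_diff_right smult_diff_right algebra_simps)

lemma inner_alg:
  "tmul q U (tmul q Pa Pb) - tmul q (tmul q Qa Qb) U =
   tmul q Qa (tmul q U Pb - tmul q Qb U) + tmul q (tmul q U Pa - tmul q Qa U) (Pb::'k poly)"
  by (simp add: tmul_diff_left tmul_diff_right tmul_assoc algebra_simps)

lemma sder_inner: "sder q phi psi (\<lambda>a. tmul q U (pa q phi a) - tmul q (pa q psi a) (U::'k poly))"
  unfolding sder_def
proof (intro conjI ballI allI impI)
  fix a b :: "'k poly" assume "a \<in> FqT q" "b \<in> FqT q"
  then show "tmul q U (pa q phi (a * b)) - tmul q (pa q psi (a * b)) U =
    tmul q (pa q psi a) (tmul q U (pa q phi b) - tmul q (pa q psi b) U) +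
    tmul q (tmul q U (pa q phi a) - tmul q (pa q psi a) U) (pa q phi b)"
    by (simp add: pa_mult inner_alg)
next
  fix a b :: "'k poly"
  show "tmul q U (pa q phi (a + b)) - tmul q (pa q psi (a + b)) U =
    tmul q U (pa q phi a) - tmul q (pa q psi a) U + (tmul q U (pa q phi b) - tmul q (pa q psi b) U)"
    by (simp add: pa_add tmul_add_left tmul_add_right)
next
  fix c :: 'k and a :: "'k poly" assume "c ^ q = c"
  then show "tmul q U (pa q phi (smult c a)) - tmul q (pa q psi (smult c a)) U =
    smult c (tmul q U (pa q phi a) - tmul q (pa q psi a) U)"
    by (simp add: pa_smult tmul_smult_left tmul_smult_right smult_diff_right)
qed

lemma dsc_ext: "degree a < N \<Longrightarrow> dsc q phi psi (M::'k poly) a = (\<Sum>l<N. smult (coeff a l) (Dl q phi psi M l))"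
  unfolding dsc_def by (intro sum.mono_neutral_left) (auto simp: coeff_eq_0)

lemma dsc_add: "dsc q phi psi (M::'k poly) (a + b) = dsc q phi psi M a + dsc q phi psi M b"
proof -
  let ?N = "Suc (max (degree a) (degree b))"
  have "degree (a + b) < ?N" using degree_add_le_max[of a b] by simp
  then show ?thesis
    by (simp add: dsc_ext[of _ ?N] smult_add_left sum.distrib)
qed

lemma dsc_smult: "dsc q phi psi (M::'k poly) (smult c a) = smult c (dsc q phi psi M a)"
proof -
  have "degree (smult c a) < Suc (degree a)" using degree_smult_le[of c a] by simp
  then show ?thesis
    by (simp only: dsc_ext[of _ "Suc (degree a)"] coeff_smult smult_sumr smult_smult[symmetric] lessI)
qed

lemma dsc_const: "dsc q phi psi (M::'k poly) [:c:] = 0"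
  by (simp add: dsc_def)

lemma dsc_t: "dsc q phi psi (M::'k poly) [:0, 1:] = M"
  by (simp add: dsc_def)

lemma dsc_pCons0:
  assumes a: "a \<in> FqT q"
  shows "dsc q phi psi (M::'k poly) (pCons 0 a) = tmul q psi (dsc q phi psi M a) + tmul q M (pa q phi a)"
proof -
  let ?N = "Suc (degree a)"
  have d: "degree (pCons 0 a) < Suc ?N" by (simp add: degree_pCons_le le_imp_less_Suc)
  have "dsc q phi psi M (pCons 0 a) = (\<Sum>l<Suc ?N. smult (coeff (pCons 0 a) l) (Dl q phi psi M l))"
    using dsc_ext[OF d] .
  also have "\<dots> = (\<Sum>l<?N. smult (coeff a l) (Dl q phi psi M (Suc l)))"
    by (subst sum.lessThan_Suc_shift) simp
  also have "\<dots> = (\<Sum>l<?N. tmul q psi (smult (coeff a l) (Dl q phi psi M l)) +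
       tmul q M (smult (coeff a l) (tpow q phi l)))"
    using a by (simp add: tmul_smult_right FqT_coeff smult_add_right)
  also have "\<dots> = tmul q psi (dsc q phi psi M a) + tmul q M (pa q phi a)"
    by (simp only: dsc_ext[of a ?N, OF lessI] pa_ext[of a ?N, OF lessI] tmul_sum_right sum.distrib)
  finally show ?thesis .
qed

lemma dsc_pCons:
  assumes a: "a \<in> FqT q"
  shows "dsc q phi psi (M::'k poly) (pCons c a) = tmul q psi (dsc q phi psi M a) + tmul q M (pa q phi a)"
  by (subst pCons_split) (simp only: dsc_add dsc_const dsc_pCons0[OF a] add_0_left)

lemma dsc_mult:
  "a \<in> FqT q \<Longrightarrow> b \<in> FqT q \<Longrightarrow>
   dsc q phi psi (M::'k poly) (a * b) = tmul q (pa q psi a) (dsc q phi psi M b) + tmul q (dsc q phi psi M a) (pa q phi b)"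
proof (induction a rule: pCons_induct)
  case 0 then show ?case by (simp add: dsc_def)
next
  case (pCons c a)
  from pCons.prems have c: "c ^ q = c" and a: "a \<in> FqT q" by (auto simp: FqT_pCons)
  have ab: "a * b \<in> FqT q" using a pCons.prems by (simp add: FqT_mult)
  have "dsc q phi psi M (pCons c a * b) = dsc q phi psi M (smult c b + pCons 0 (a * b))" by simp
  also have "\<dots> = smult c (dsc q phi psi M b) + tmul q psi (dsc q phi psi M (a * b)) + tmul q M (pa q phi (a * b))"
    by (simp add: dsc_add dsc_smult dsc_pCons0[OF ab])
  also have "\<dots> = smult c (dsc q phi psi M b)
      + tmul q psi (tmul q (pa q psi a) (dsc q phi psi M b) + tmul q (dsc q phi psi M a) (pa q phi b))
      + tmul q M (tmul q (pa q phi a) (pa q phi b))"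
    by (simp add: pCons.IH[OF a pCons.prems(2)] pa_mult[OF a pCons.prems(2)])
  also have "\<dots> = tmul q (pa q psi (pCons c a)) (dsc q phi psi M b) + tmul q (dsc q phi psi M (pCons c a)) (pa q phi b)"
    by (simp add: pa_pCons dsc_pCons[OF a] tmul_add_left tmul_add_right tmul_const_left tmul_assoc
        pa_comm[OF a, symmetric] add_ac)
  finally show ?case .
qed

lemma sder_dsc: "sder q phi psi (dsc q phi psi (M::'k poly))"
  unfolding sder_def by (simp add: dsc_add dsc_smult dsc_mult)

end



definition TT :: "nat \<Rightarrow> nat \<Rightarrow> (nat \<Rightarrow> 'k::field poly) \<Rightarrow> (nat \<times> nat \<times> nat) set" where
  "TT n m phis = (SIGMA j:{..<m}. SIGMA i:{..<n}. {..<degree (phis i)})"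

definition DD :: "nat \<Rightarrow> nat \<Rightarrow> (nat \<Rightarrow> 'k::field poly) \<Rightarrow> nat" where
  "DD n m phis = m * (\<Sum>i<n. drank (phis i))"

definition PPm :: "nat \<Rightarrow> (nat \<Rightarrow> 'k::field poly) \<Rightarrow> (nat \<Rightarrow> 'k poly) \<Rightarrow> nat \<Rightarrow> nat \<Rightarrow> 'k tmat" where
  "PPm q phis psis j i = (SOME P. P \<in> mats (degree (phis i)) (degree (phis i)) \<and>
     (\<forall>l l'. coeff (P l l') 0 = (if l = l' \<and> l < degree (phis i) then coeff (psis j) 0 else 0)) \<and>
     (\<forall>Y. mvec q (degree (phis i)) P (coeff (red q (phis i) (psis j) Y)) =
          coeff (red q (phis i) (psis j) (tmul q (psis j) Y))))"

definition FF :: "nat \<Rightarrow> nat \<Rightarrow> nat \<Rightarrow> (nat \<Rightarrow> 'k::field poly) \<Rightarrow> (nat \<Rightarrow> 'k poly) \<Rightarrow> (nat \<times> nat \<times> nat \<Rightarrow> nat)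
    \<Rightarrow> ('k poly \<Rightarrow> 'k tmat) \<Rightarrow> (nat \<Rightarrow> 'k)" where
  "FF q n m phis psis e \<delta> = (\<lambda>k. if k < DD n m phis then
     (case the_inv_into (TT n m phis) e k of (j, i, x) \<Rightarrow>
        coeff (red q (phis i) (psis j) (\<delta> [:0, 1:] j i)) x) else 0)"

definition Pim :: "nat \<Rightarrow> nat \<Rightarrow> nat \<Rightarrow> (nat \<Rightarrow> 'k::field poly) \<Rightarrow> (nat \<Rightarrow> 'k poly) \<Rightarrow> (nat \<times> nat \<times> nat \<Rightarrow> nat)
    \<Rightarrow> 'k tmat" where
  "Pim q n m phis psis e = (\<lambda>k k'. if k < DD n m phis \<and> k' < DD n m phis then
     (case the_inv_into (TT n m phis) e k of (j, i, x) \<Rightarrow>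
       case the_inv_into (TT n m phis) e k' of (j', i', x') \<Rightarrow>
         if j = j' \<and> i = i' then PPm q phis psis j i x x' else 0) else 0)"

locale fin = frob q tyk for q and tyk :: "'k::field itself" +
  fixes n m :: nat and phis psis :: "nat \<Rightarrow> 'k poly" and \<theta> :: 'k and e :: "nat \<times> nat \<times> nat \<Rightarrow> nat"
  assumes drin_phi: "\<forall>i<n. is_drinfeld \<theta> (phis i)"
    and drin_psi: "\<forall>j<m. is_drinfeld \<theta> (psis j)"
    and ranks: "\<forall>i<n. \<forall>j<m. drank (phis i) > drank (psis j)"
    and ebij: "bij_betw e (TT n m phis) {..<DD n m phis}"
begin

abbreviation "D \<equiv> DD n m phis"
abbreviation "dec \<equiv> the_inv_into (TT n m phis) e"
abbreviation "Phi \<equiv> prodmod n phis"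
abbreviation "Psi \<equiv> prodmod m psis"
abbreviation "tt \<equiv> ([:0, 1:] :: 'k poly)"

lemma TT_mem: "(j, i, x) \<in> TT n m phis \<longleftrightarrow> j < m \<and> i < n \<and> x < degree (phis i)"
  by (simp add: TT_def)

lemma e_inj: "inj_on e (TT n m phis)"
  using ebij by (simp add: bij_betw_def)

lemma e_lt: "j < m \<Longrightarrow> i < n \<Longrightarrow> x < degree (phis i) \<Longrightarrow> e (j, i, x) < D"
  using ebij TT_mem[of j i x] unfolding bij_betw_def by auto

lemma dec_e: "j < m \<Longrightarrow> i < n \<Longrightarrow> x < degree (phis i) \<Longrightarrow> dec (e (j, i, x)) = (j, i, x)"
  using the_inv_into_f_f[OF e_inj] TT_mem by auto

lemma dec_obtain:
  assumes "k < D"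
  obtains j i x where "dec k = (j, i, x)" "j < m" "i < n" "x < degree (phis i)" "e (j, i, x) = k"
proof -
  have k: "k \<in> e ` TT n m phis" using assms ebij by (simp add: bij_betw_def)
  have "dec k \<in> TT n m phis" by (rule the_inv_into_into[OF e_inj k order_refl])
  moreover have "e (dec k) = k" by (rule f_the_inv_into_f[OF e_inj k])
  ultimately show ?thesis using that by (cases "dec k") (auto simp: TT_mem)
qed

lemma scal_ij: "j < m \<Longrightarrow> i < n \<Longrightarrow> scal q (phis i) (psis j)"
  using ranks frob_axioms unfolding scal_def scal_axioms_def drank_def by auto

lemma PP_prop:
  assumes "j < m" "i < n"
  shows "PPm q phis psis j i \<in> mats (degree (phis i)) (degree (phis i))"
    "\<And>l l'. coeff (PPm q phis psis j i l l') 0 = (if l = l' \<and> l < degree (phis i) then coeff (psis j) 0 else 0)"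
    "\<And>Y. mvec q (degree (phis i)) (PPm q phis psis j i) (coeff (red q (phis i) (psis j) Y)) =
          coeff (red q (phis i) (psis j) (tmul q (psis j) Y))"
proof -
  note ex = scal.P_exists[OF scal_ij[OF assms]]
  have "\<exists>P. P \<in> mats (degree (phis i)) (degree (phis i)) \<and>
     (\<forall>l l'. coeff (P l l') 0 = (if l = l' \<and> l < degree (phis i) then coeff (psis j) 0 else 0)) \<and>
     (\<forall>Y. mvec q (degree (phis i)) P (coeff (red q (phis i) (psis j) Y)) =
          coeff (red q (phis i) (psis j) (tmul q (psis j) Y)))"
    using ex by blast
  then have H: "PPm q phis psis j i \<in> mats (degree (phis i)) (degree (phis i)) \<and>
     (\<forall>l l'. coeff (PPm q phis psis j i l l') 0 = (if l = l' \<and> l < degree (phis i) then coeff (psis j) 0 else 0)) \<and>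
     (\<forall>Y. mvec q (degree (phis i)) (PPm q phis psis j i) (coeff (red q (phis i) (psis j) Y)) =
          coeff (red q (phis i) (psis j) (tmul q (psis j) Y)))"
    unfolding PPm_def by (rule someI_ex)
  then show "PPm q phis psis j i \<in> mats (degree (phis i)) (degree (phis i))" by (rule conjunct1)
  from H have h2: "\<forall>l l'. coeff (PPm q phis psis j i l l') 0 = (if l = l' \<and> l < degree (phis i) then coeff (psis j) 0 else 0)"
    by blast
  from H have h3: "\<forall>Y. mvec q (degree (phis i)) (PPm q phis psis j i) (coeff (red q (phis i) (psis j) Y)) =
          coeff (red q (phis i) (psis j) (tmul q (psis j) Y))" by blast
  fix l l' show "coeff (PPm q phis psis j i l l') 0 = (if l = l' \<and> l < degree (phis i) then coeff (psis j) 0 else 0)"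
    using h2 by blast
  fix Y show "mvec q (degree (phis i)) (PPm q phis psis j i) (coeff (red q (phis i) (psis j) Y)) =
          coeff (red q (phis i) (psis j) (tmul q (psis j) Y))"
    using h3 by blast
qed

lemma Pim_mats: "Pim q n m phis psis e \<in> mats D D"
  by (auto simp: mats_def Pim_def)

lemma Pim_tmodule: "is_tmodule q \<theta> D (Pim q n m phis psis e)"
  unfolding is_tmodule_def
proof (intro conjI Pim_mats)
  have "(\<lambda>k k'. coeff (Pim q n m phis psis e k k') 0 - (if k = k' \<and> k < D then \<theta> else 0)) = (\<lambda>i j. 0)"
  proof (intro ext)
    fix k k'
    show "coeff (Pim q n m phis psis e k k') 0 - (if k = k' \<and> k < D then \<theta> else 0) = 0"
    proof (cases "k < D \<and> k' < D")
      case True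
      then have k: "k < D" and k': "k' < D" by auto
      obtain j i x where A: "dec k = (j, i, x)" "j < m" "i < n" "x < degree (phis i)" "e (j, i, x) = k"
        using dec_obtain[OF k] by blast
      obtain j' i' x' where B: "dec k' = (j', i', x')" "j' < m" "i' < n" "x' < degree (phis i')" "e (j', i', x') = k'"
        using dec_obtain[OF k'] by blast
      have th: "coeff (psis j) 0 = \<theta>" using drin_psi A(2) by (simp add: is_drinfeld_def)
      show ?thesis
      proof (cases "j = j' \<and> i = i'")
        case True
        have "k = k' \<longleftrightarrow> x = x'"
        proof
          assume "k = k'" then show "x = x'" using A(1) B(1) by simp
        next
          assume "x = x'" then show "k = k'" using A(5) B(5) True by blast
        qed
        then show ?thesis using True A B k k' th by (simp add: Pim_def PP_prop(2))
      next
        case False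
        then have "k \<noteq> k'" using A(1) B(1) by auto
        then show ?thesis using False A B k k' by (auto simp: Pim_def)
      qed
    next
      case False
      then show ?thesis by (auto simp: Pim_def)
    qed
  qed
  then show "knilpotent D (\<lambda>i j. coeff (Pim q n m phis psis e i j) 0 - (if i = j \<and> i < D then \<theta> else 0))"
    unfolding knilpotent_def by (intro exI[of _ 0]) simp
qed


lemma F_at: "k < D \<Longrightarrow> dec k = (j, i, x) \<Longrightarrow>
   FF q n m phis psis e \<delta> k = coeff (red q (phis i) (psis j) (\<delta> tt j i)) x"
  by (simp add: FF_def)

lemma F_e: "j < m \<Longrightarrow> i < n \<Longrightarrow> x < degree (phis i) \<Longrightarrow>
   FF q n m phis psis e \<delta> (e (j, i, x)) = coeff (red q (phis i) (psis j) (\<delta> tt j i)) x"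
  by (simp add: F_at e_lt dec_e)

lemma F_vecs: "FF q n m phis psis e \<delta> \<in> vecs D"
  by (simp add: FF_def vecs_def)

lemma der_mats: "is_der q n Phi m Psi \<delta> \<Longrightarrow> a \<in> FqT q \<Longrightarrow> \<not> (j < m \<and> i < n) \<Longrightarrow> \<delta> a j i = 0"
  unfolding is_der_def mats_def by auto

lemma der_entry:
  assumes d: "is_der q n Phi m Psi \<delta>" and j: "j < m" and i: "i < n"
  shows "sder q (phis i) (psis j) (\<lambda>a. \<delta> a j i)"
proof -
  have add: "\<forall>a\<in>FqT q. \<forall>b\<in>FqT q. \<delta> (a + b) = madd (\<delta> a) (\<delta> b)"
    and sm: "\<forall>c a. c ^ q = c \<longrightarrow> a \<in> FqT q \<longrightarrow> \<delta> (smult c a) = msmul c (\<delta> a)"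
    and lb: "\<forall>a\<in>FqT q. \<forall>b\<in>FqT q. \<delta> (a * b) =
        madd (mmul q m (tact q m Psi a) (\<delta> b)) (mmul q n (\<delta> a) (tact q n Phi b))"
    using d unfolding is_der_def by blast+
  show ?thesis unfolding sder_def
  proof (intro conjI ballI allI impI)
    fix a b :: "'k poly" assume "a \<in> FqT q" "b \<in> FqT q"
    then show "\<delta> (a + b) j i = \<delta> a j i + \<delta> b j i" using add by (simp add: madd_def)
  next
    fix a b :: "'k poly" assume "a \<in> FqT q" "b \<in> FqT q"
    then show "\<delta> (a * b) j i = tmul q (pa q (psis j) a) (\<delta> b j i) + tmul q (\<delta> a j i) (pa q (phis i) b)"
      using lb i j by (simp add: madd_def tact_prodmod mmul_prodmod_left mmul_prodmod_right)
  next
    fix c :: 'k and a :: "'k poly" assume "c ^ q = c" "a \<in> FqT q"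
    then show "\<delta> (smult c a) j i = smult c (\<delta> a j i)" using sm by (simp add: msmul_def)
  qed
qed

lemma conj_add:
  assumes "is_der q n Phi m Psi \<delta>1" "is_der q n Phi m Psi \<delta>2"
  shows "FF q n m phis psis e (\<lambda>a. madd (\<delta>1 a) (\<delta>2 a)) =
     (\<lambda>k. FF q n m phis psis e \<delta>1 k + FF q n m phis psis e \<delta>2 k)"
proof (rule ext)
  fix k
  show "FF q n m phis psis e (\<lambda>a. madd (\<delta>1 a) (\<delta>2 a)) k = FF q n m phis psis e \<delta>1 k + FF q n m phis psis e \<delta>2 k"
  proof (cases "k < D")
    case True
    then obtain j i x where A: "dec k = (j, i, x)" "j < m" "i < n" by (rule dec_obtain)
    show ?thesis using True A
      by (simp add: F_at madd_def scal.red_add[OF scal_ij[OF A(2,3)]])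
  qed (simp add: FF_def)
qed

lemma coeff_Mv: "coeff (\<Sum>x<degree (phis i). monom (w x) x) l = (if l < degree (phis i) then w l else (0::'k))"
  by (simp add: coeff_sum coeff_monom)

lemma conj_surj:
  assumes v: "v \<in> vecs D"
  shows "\<exists>\<delta>. is_der q n Phi m Psi \<delta> \<and> FF q n m phis psis e \<delta> = v"
proof -
  define Mv where "Mv j i = (\<Sum>x<degree (phis i). monom (v (e (j, i, x))) x)" for j i
  define \<delta> where "\<delta> a = (if a \<in> FqT q then (\<lambda>j i. if j < m \<and> i < n then dsc q (phis i) (psis j) (Mv j i) a else 0)
      else (\<lambda>j i. 0))" for a
  have der: "is_der q n Phi m Psi \<delta>"
    unfolding is_der_def
  proof (intro conjI ballI allI impI)
    fix a :: "'k poly" assume "a \<in> FqT q"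
    then show "\<delta> a \<in> mats m n" by (simp add: \<delta>_def mats_def)
  next
    fix a :: "'k poly" assume "a \<notin> FqT q"
    then show "\<delta> a = (\<lambda>i j. 0)" by (simp add: \<delta>_def)
  next
    fix a b :: "'k poly" assume "a \<in> FqT q" "b \<in> FqT q"
    then show "\<delta> (a + b) = madd (\<delta> a) (\<delta> b)"
      by (intro ext) (simp add: \<delta>_def madd_def FqT_add dsc_add)
  next
    fix c :: 'k and a :: "'k poly" assume "c ^ q = c" "a \<in> FqT q"
    then show "\<delta> (smult c a) = msmul c (\<delta> a)"
      by (intro ext) (simp add: \<delta>_def msmul_def FqT_smult dsc_smult)
  next
    fix a b :: "'k poly" assume a: "a \<in> FqT q" and b: "b \<in> FqT q"
    show "\<delta> (a * b) = madd (mmul q m (tact q m Psi a) (\<delta> b)) (mmul q n (\<delta> a) (tact q n Phi b))"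
    proof (intro ext)
      fix j i
      show "\<delta> (a * b) j i = madd (mmul q m (tact q m Psi a) (\<delta> b)) (mmul q n (\<delta> a) (tact q n Phi b)) j i"
        using a b by (simp add: \<delta>_def madd_def tact_prodmod mmul_prodmod_left mmul_prodmod_right FqT_mult dsc_mult)
    qed
  qed
  have "FF q n m phis psis e \<delta> = v"
  proof (rule ext)
    fix k
    show "FF q n m phis psis e \<delta> k = v k"
    proof (cases "k < D")
      case True
      then obtain j i x where A: "dec k = (j, i, x)" "j < m" "i < n" "x < degree (phis i)" "e (j, i, x) = k"
        by (rule dec_obtain)
      have tt: "\<delta> tt j i = Mv j i" using A by (simp add: \<delta>_def dsc_t)
      have "isred (phis i) (Mv j i)" by (simp add: isred_def Mv_def coeff_Mv)
      then have "red q (phis i) (psis j) (Mv j i) = Mv j i"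
        by (rule scal.red_of_isred[OF scal_ij[OF A(2,3)]])
      then show ?thesis using True A tt by (simp add: F_at Mv_def coeff_Mv)
    next
      case False
      then show ?thesis using v by (simp add: FF_def vecs_def)
    qed
  qed
  then show ?thesis using der by blast
qed

lemma L_diff2: "scal q phi psi \<Longrightarrow> A = a + Lop q phi psi U \<Longrightarrow> B = a + Lop q phi psi V \<Longrightarrow>
    A - B = Lop q phi psi (U - V)"
  by (simp add: scal.L_diff)

lemma conj_inner:
  assumes d1: "is_der q n Phi m Psi \<delta>1" and d2: "is_der q n Phi m Psi \<delta>2"
  shows "FF q n m phis psis e \<delta>1 = FF q n m phis psis e \<delta>2 \<longleftrightarrow>
     is_inner_der q n Phi m Psi (\<lambda>a. msub (\<delta>1 a) (\<delta>2 a))"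
proof
  assume FE: "FF q n m phis psis e \<delta>1 = FF q n m phis psis e \<delta>2"
  have redeq: "red q (phis i) (psis j) (\<delta>1 tt j i) = red q (phis i) (psis j) (\<delta>2 tt j i)"
    if j: "j < m" and i: "i < n" for j i
  proof (rule scal.isred_eqI[OF scal_ij[OF j i]])
    show "isred (phis i) (red q (phis i) (psis j) (\<delta>1 tt j i))"
      by (rule scal.red_isred[OF scal_ij[OF j i]])
    show "isred (phis i) (red q (phis i) (psis j) (\<delta>2 tt j i))"
      by (rule scal.red_isred[OF scal_ij[OF j i]])
    fix x assume "x < degree (phis i)"
    then show "coeff (red q (phis i) (psis j) (\<delta>1 tt j i)) x = coeff (red q (phis i) (psis j) (\<delta>2 tt j i)) x"
      using FE F_e[OF j i, of x] by metis
  qed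
  have exU: "\<exists>U. \<delta>1 tt j i - \<delta>2 tt j i = Lop q (phis i) (psis j) U"
    if j: "j < m" and i: "i < n" for j i
  proof -
    obtain U1 where U1: "\<delta>1 tt j i = red q (phis i) (psis j) (\<delta>1 tt j i) + Lop q (phis i) (psis j) U1"
      using scal.red_spec[OF scal_ij[OF j i]] by blast
    obtain U2 where U2: "\<delta>2 tt j i = red q (phis i) (psis j) (\<delta>1 tt j i) + Lop q (phis i) (psis j) U2"
      using scal.red_spec[OF scal_ij[OF j i], of "\<delta>2 tt j i"] redeq[OF j i] by metis
    show ?thesis using L_diff2[OF scal_ij[OF j i] U1 U2] by blast
  qed
  define U where "U j i = (if j < m \<and> i < n then (SOME U. \<delta>1 tt j i - \<delta>2 tt j i = Lop q (phis i) (psis j) U) else 0)" for j i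
  have Um: "U \<in> mats m n" by (auto simp: U_def mats_def)
  have Up: "\<delta>1 tt j i - \<delta>2 tt j i = Lop q (phis i) (psis j) (U j i)" if "j < m" "i < n" for j i
    using someI_ex[OF exU[OF that]] that by (simp add: U_def)
  show "is_inner_der q n Phi m Psi (\<lambda>a. msub (\<delta>1 a) (\<delta>2 a))"
    unfolding is_inner_der_def
  proof (intro bexI[OF _ Um] ballI)
    fix a :: "'k poly" assume a: "a \<in> FqT q"
    show "msub (\<delta>1 a) (\<delta>2 a) = msub (mmul q n U (tact q n Phi a)) (mmul q m (tact q m Psi a) U)"
    proof (intro ext)
      fix j i
      show "msub (\<delta>1 a) (\<delta>2 a) j i = msub (mmul q n U (tact q n Phi a)) (mmul q m (tact q m Psi a) U) j i"
      proof (cases "j < m \<and> i < n")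
        case True
        then have j: "j < m" and i: "i < n" by auto
        define dd where "dd a = (\<delta>1 a j i - \<delta>2 a j i) -
            (tmul q (U j i) (pa q (phis i) a) - tmul q (pa q (psis j) a) (U j i))" for a
        have sd: "sder q (phis i) (psis j) dd"
          unfolding dd_def
          by (intro sder_diff sder_inner der_entry[OF d1 j i] der_entry[OF d2 j i])
        have "dd tt = 0" using Up[OF j i] by (simp add: dd_def Lop_def)
        then have "dd a = 0" using sder_zero_t[OF sd _ a] by blast
        then show ?thesis using j i
          by (simp add: dd_def msub_def tact_prodmod mmul_prodmod_left mmul_prodmod_right)
      next
        case False
        then have "U j i = 0" unfolding U_def by auto
        then show ?thesis using False der_mats[OF d1 a False] der_mats[OF d2 a False]
          by (simp add: msub_def tact_prodmod mmul_prodmod_left mmul_prodmod_right)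
      qed
    qed
  qed
next
  assume "is_inner_der q n Phi m Psi (\<lambda>a. msub (\<delta>1 a) (\<delta>2 a))"
  then obtain U where Um: "U \<in> mats m n" and
    UA: "\<forall>a\<in>FqT q. msub (\<delta>1 a) (\<delta>2 a) = msub (mmul q n U (tact q n Phi a)) (mmul q m (tact q m Psi a) U)"
    unfolding is_inner_der_def by blast
  have e1: "\<delta>1 tt j i = \<delta>2 tt j i + Lop q (phis i) (psis j) (U j i)" if j: "j < m" and i: "i < n" for j i
  proof -
    have "msub (\<delta>1 tt) (\<delta>2 tt) j i = msub (mmul q n U (tact q n Phi tt)) (mmul q m (tact q m Psi tt) U) j i"
      using UA by simp
    then have "\<delta>1 tt j i - \<delta>2 tt j i = tmul q (U j i) (phis i) - tmul q (psis j) (U j i)"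
      using j i by (simp add: msub_def tact_prodmod mmul_prodmod_left mmul_prodmod_right)
    then show ?thesis by (simp add: Lop_def diff_eq_eq)
  qed
  show "FF q n m phis psis e \<delta>1 = FF q n m phis psis e \<delta>2"
  proof (rule ext)
    fix k
    show "FF q n m phis psis e \<delta>1 k = FF q n m phis psis e \<delta>2 k"
    proof (cases "k < D")
      case True
      then obtain j i x where A: "dec k = (j, i, x)" "j < m" "i < n" by (rule dec_obtain)
      show ?thesis using True A e1[OF A(2,3)]
        by (simp add: F_at scal.red_L[OF scal_ij[OF A(2,3)]])
    qed (simp add: FF_def)
  qed
qed


lemma block_sum:
  assumes k: "k < D" and A: "dec k = (j, i, x)" "j < m" "i < n"
  shows "(\<Sum>k'<D. teval q (Pim q n m phis psis e k k') (w k')) =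
     (\<Sum>x'<degree (phis i). teval q (PPm q phis psis j i x x') (w (e (j, i, x'))))"
proof -
  let ?g = "\<lambda>k'. teval q (Pim q n m phis psis e k k') (w k')"
  let ?A = "(\<lambda>x'. e (j, i, x')) ` {..<degree (phis i)}"
  have sub: "?A \<subseteq> {..<D}" using e_lt A by auto
  have "(\<Sum>k'<D. ?g k') = (\<Sum>k'\<in>?A. ?g k')"
  proof (rule sum.mono_neutral_right)
    show "finite {..<D}" by simp
    show "?A \<subseteq> {..<D}" by (rule sub)
    show "\<forall>k'\<in>{..<D} - ?A. ?g k' = 0"
    proof
      fix k' assume k': "k' \<in> {..<D} - ?A"
      then have k'D: "k' < D" by simp
      obtain j' i' x' where B: "dec k' = (j', i', x')" "j' < m" "i' < n" "x' < degree (phis i')" "e (j', i', x') = k'"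
        using dec_obtain[OF k'D] by blast
      have "\<not> (j = j' \<and> i = i')"
      proof
        assume "j = j' \<and> i = i'"
        then have "k' \<in> ?A" using B by auto
        then show False using k' by simp
      qed
      then have "Pim q n m phis psis e k k' = 0" using k k'D A(1) B(1) by (auto simp: Pim_def)
      then show "?g k' = 0" by simp
    qed
  qed
  also have "\<dots> = (\<Sum>x'<degree (phis i). ?g (e (j, i, x')))"
  proof (rule sum.reindex[unfolded comp_def])
    show "inj_on (\<lambda>x'. e (j, i, x')) {..<degree (phis i)}"
    proof (rule inj_onI)
      fix x1 x2 assume x: "x1 \<in> {..<degree (phis i)}" "x2 \<in> {..<degree (phis i)}" "e (j, i, x1) = e (j, i, x2)"
      then have "dec (e (j, i, x1)) = dec (e (j, i, x2))" by simp
      then show "x1 = x2" using dec_e[OF A(2,3)] x(1,2) by simp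
    qed
  qed
  also have "\<dots> = (\<Sum>x'<degree (phis i). teval q (PPm q phis psis j i x x') (w (e (j, i, x'))))"
    using k A by (intro sum.cong refl) (simp add: Pim_def e_lt dec_e)
  finally show ?thesis .
qed

lemma conj_act:
  assumes a: "a \<in> FqT q" and d: "is_der q n Phi m Psi \<delta>"
  shows "FF q n m phis psis e (\<lambda>b. mmul q m (tact q m Psi a) (\<delta> b)) =
     mvec q D (tact q D (Pim q n m phis psis e) a) (FF q n m phis psis e \<delta>)"
proof -
  let ?P = "Pim q n m phis psis e"
  define G where "G l = (\<lambda>k. if k < D then (case dec k of (j, i, x) \<Rightarrow>
      coeff (red q (phis i) (psis j) (tmul q (tpow q (psis j) l) (\<delta> tt j i))) x) else 0)" for l
  have Gl: "(mvec q D ?P ^^ l) (FF q n m phis psis e \<delta>) = G l" for l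
  proof (induction l)
    case 0
    show ?case by (rule ext) (simp add: G_def FF_def)
  next
    case (Suc l)
    show ?case
    proof (rule ext)
      fix k
      have "(mvec q D ?P ^^ Suc l) (FF q n m phis psis e \<delta>) k = mvec q D ?P (G l) k"
        using Suc by simp
      also have "mvec q D ?P (G l) k = G (Suc l) k"
      proof (cases "k < D")
        case True
        then obtain j i x where A: "dec k = (j, i, x)" "j < m" "i < n" "x < degree (phis i)"
          by (rule dec_obtain)
        let ?X = "\<delta> tt j i"
        have "mvec q D ?P (G l) k = (\<Sum>x'<degree (phis i). teval q (PPm q phis psis j i x x') (G l (e (j, i, x'))))"
          unfolding mvec_def by (rule block_sum[OF True A(1-3)])
        also have "\<dots> = (\<Sum>x'<degree (phis i). teval q (PPm q phis psis j i x x')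
             (coeff (red q (phis i) (psis j) (tmul q (tpow q (psis j) l) ?X)) x'))"
          using A by (intro sum.cong refl) (simp add: G_def e_lt dec_e)
        also have "\<dots> = mvec q (degree (phis i)) (PPm q phis psis j i)
             (coeff (red q (phis i) (psis j) (tmul q (tpow q (psis j) l) ?X))) x"
          by (simp add: mvec_def)
        also have "\<dots> = coeff (red q (phis i) (psis j) (tmul q (psis j) (tmul q (tpow q (psis j) l) ?X))) x"
          by (simp only: PP_prop(3)[OF A(2,3)])
        also have "\<dots> = G (Suc l) k"
          using True A by (simp add: G_def tmul_assoc)
        finally show ?thesis .
      next
        case False
        have "mvec q D ?P (G l) \<in> vecs D" by (rule mvec_vecs[OF Pim_mats])
        then show ?thesis using False by (simp add: vecs_def G_def)
      qed
      finally show "(mvec q D ?P ^^ Suc l) (FF q n m phis psis e \<delta>) k = G (Suc l) k" .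
    qed
  qed
  have R: "mvec q D (tact q D ?P a) (FF q n m phis psis e \<delta>) =
      (\<lambda>r. \<Sum>l\<le>degree a. coeff a l * G l r)"
    by (simp add: mvec_tact mvec_mpow[OF Pim_mats F_vecs] Gl)
  show ?thesis
  proof (rule ext)
    fix k
    show "FF q n m phis psis e (\<lambda>b. mmul q m (tact q m Psi a) (\<delta> b)) k =
        mvec q D (tact q D ?P a) (FF q n m phis psis e \<delta>) k"
    proof (cases "k < D")
      case True
      then obtain j i x where A: "dec k = (j, i, x)" "j < m" "i < n" "x < degree (phis i)"
        by (rule dec_obtain)
      let ?X = "\<delta> tt j i"
      note sc = scal_ij[OF A(2,3)]
      have "FF q n m phis psis e (\<lambda>b. mmul q m (tact q m Psi a) (\<delta> b)) k =
          coeff (red q (phis i) (psis j) (tmul q (pa q (psis j) a) ?X)) x"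
        using True A by (simp add: F_at tact_prodmod mmul_prodmod_left)
      also have "tmul q (pa q (psis j) a) ?X =
          (\<Sum>l\<le>degree a. smult (coeff a l) (tmul q (tpow q (psis j) l) ?X))"
        by (simp add: pa_def tmul_sum_left tmul_smult_left)
      also have "red q (phis i) (psis j) \<dots> =
          (\<Sum>l\<le>degree a. smult (coeff a l) (red q (phis i) (psis j) (tmul q (tpow q (psis j) l) ?X)))"
        using a by (intro scal.red_sum[OF sc]) (simp add: FqT_coeff)
      also have "coeff \<dots> x = (\<Sum>l\<le>degree a. coeff a l * G l k)"
        using True A by (simp add: coeff_sum G_def)
      finally show ?thesis using R by simp
    next
      case False
      then show ?thesis using R by (simp add: FF_def G_def)
    qed
  qed
qed

lemma main: "is_tmodule q \<theta> D (Pim q n m phis psis e) \<and>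
   ext_iso_MW q n Phi m Psi D (Pim q n m phis psis e) (FF q n m phis psis e)"
  unfolding ext_iso_MW_def
  using Pim_tmodule F_vecs conj_surj conj_inner conj_add conj_act by blast

end




theorem theorem6p1:
  fixes p q k n m :: nat and \<theta> :: "'k::field" and \<phi>s \<psi>s :: "nat \<Rightarrow> 'k poly"
  assumes "prime p" and "CHAR('k) = p" and "1 \<le> k" and "q = p ^ k"
    and "card {x::'k. x ^ q = x} = q"
    and "1 \<le> n" and "1 \<le> m"
    and "\<forall>i<n. is_drinfeld \<theta> (\<phi>s i)" and "\<forall>j<m. is_drinfeld \<theta> (\<psi>s j)"
    and "\<forall>i<n. \<forall>j<m. drank (\<phi>s i) > drank (\<psi>s j)"
  shows "\<exists>Pit F. is_tmodule q \<theta> (m * (\<Sum>i<n. drank (\<phi>s i))) Pit \<and>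
           ext_iso_MW q n (prodmod n \<phi>s) m (prodmod m \<psi>s)
             (m * (\<Sum>i<n. drank (\<phi>s i))) Pit F"
proof -
  have pr: "prime (CHAR('k))" using assms(1,2) by simp
  have qpos: "0 < q" using assms(1,4) prime_gt_0_nat by simp
  have fa: "(x + y) ^ q = x ^ q + y ^ q" for x y :: 'k
    by (rule freshmans_dream'[OF pr]) (simp add: assms(2,4))
  have fT: "finite (TT n m \<phi>s)" by (simp add: TT_def)
  have cT: "card (TT n m \<phi>s) = card {..<DD n m \<phi>s}"
    by (simp add: TT_def DD_def drank_def)
  obtain e where e: "bij_betw e (TT n m \<phi>s) {..<DD n m \<phi>s}"
    using finite_same_card_bij[OF fT _ cT] by auto
  interpret F: fin q "TYPE('k)" n m "\<phi>s" "\<psi>s" \<theta> e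
    by unfold_locales (use qpos fa assms(8-10) e in auto)
  from F.main show ?thesis unfolding DD_def by blast
qed



end
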